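(* Let $p\in(0,1)$. The GHoC Markov chain with state space $S=\mathbb N_0\cup\{\infty\}$ and transition matrix $\Pi_p$ possesses a unique stationary distribution; let $\mathbb P_p^{GHoC}$ denote the law of the corresponding stationary two-sided chain $(n_i)_{i\in\mathbb{Z}}$. Then the sequence $(\tau(n_i))_{i\in\mathbb{Z}}$ is distributed according to the TBF $\mu'_p$, i.e. $\tau(\mathbb P_p^{GHoC})=\mu'_p$.
   Context: Fix $p\in(0,1)$. $\Omega=\{0,1\}^{\mathbb{Z}}$, $\mu_p=\mathrm{Ber}(p)^{\otimes\mathbb{Z}}$, $T:\Omega\to\Omega$, $(T\omega)_i=\omega_i\big(1-(1-\omega_{i-1})(1-\omega_{i+1})\big)$, and the TBF is $\mu'_p=\mu_p\circ T^{-1}$ on $\Omega'=T(\Omega)$. Let $\lambda_{PF}=\tfrac12\big(1-p+\sqrt{(1-p)(3p+1)}\big)$, $\lambda_r=\tfrac12\big(1-p-\sqrt{(1-p)(3p+1)}\big)$, $a=\lambda_r/\lambda_{PF}\in(-1,0)$, and define $g_p:S\to[0,1]$ by $g_p(1)=1-p$, $g_p(\infty)=\lambda_{PF}$, and for $n\ge2$: $g_p(n)=\dfrac{(-1)^{n+1}|a|^n\frac{\lambda_{PF}}{1-\lambda_r}+\frac{\lambda_{PF}}{1-\lambda_{PF}}}{(-1)^n|a|^{n-1}\frac{1}{1-\lambda_r}+\frac{1}{1-\lambda_{PF}}}$. The generalized house-of-cards (GHoC) chain on $S$ (with $\infty+1=\infty$) has transition probabilities: $\Pi_p(0,1)=1$;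 $\Pi_p(1,1)=p$, $\Pi_p(1,2)=1-p$; for $i\in\{2,3,\dots\}\cup\{\infty\}$, $\Pi_p(i,i+1)=g_p(i)$ and $\Pi_p(i,0)=1-g_p(i)$; all other entries are $0$. (The state $n_i$ encodes the distance from site $i$ to the nearest pair of adjacent occupied sites in its past, with value $0$ when the two preceding sites are (empty, occupied).) The map $\tau:S\to\{0,1\}$ is $\tau(n)=\mathbb 1_{\{0,1\}}(n)$, applied coordinatewise to paths. *)

theory Defs
  imports "HOL-Probability.Probability" "HOL-Library.Extended_Nat"
begin

text \<open>Configurations in {0,1}^Z are modelled as int => bool (True = occupied = 1).\<close>

definition Omega_M :: "(int \<Rightarrow> bool) measure" where
  "Omega_M = PiM UNIV (\<lambda>_::int. count_space (UNIV::bool set))"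

definition mu_p :: "real \<Rightarrow> (int \<Rightarrow> bool) measure" where
  "mu_p p = PiM UNIV (\<lambda>_::int. measure_pmf (bernoulli_pmf p))"

definition T_map :: "(int \<Rightarrow> bool) \<Rightarrow> int \<Rightarrow> bool" where
  "T_map \<omega> i = (\<omega> i \<and> (\<omega> (i - 1) \<or> \<omega> (i + 1)))"

definition TBF :: "real \<Rightarrow> (int \<Rightarrow> bool) measure" where
  "TBF p = distr (mu_p p) Omega_M T_map"

definition lam_PF :: "real \<Rightarrow> real" where
  "lam_PF p = (1 - p + sqrt ((1 - p) * (3 * p + 1))) / 2"

definition lam_r :: "real \<Rightarrow> real" where
  "lam_r p = (1 - p - sqrt ((1 - p) * (3 * p + 1))) / 2"

definition a_ratio :: "real \<Rightarrow> real" where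
  "a_ratio p = lam_r p / lam_PF p"

text \<open>g_p; the value at 0 is irrelevant (never used) and set to 0.\<close>
definition g_p :: "real \<Rightarrow> enat \<Rightarrow> real" where
  "g_p p x = (case x of
      enat n \<Rightarrow>
        (if n = 1 then 1 - p
         else if 2 \<le> n then
           ((-1) ^ (n + 1) * \<bar>a_ratio p\<bar> ^ n * (lam_PF p / (1 - lam_r p))
              + lam_PF p / (1 - lam_PF p))
           / ((-1) ^ n * \<bar>a_ratio p\<bar> ^ (n - 1) * (1 / (1 - lam_r p))
              + 1 / (1 - lam_PF p))
         else 0)
    | \<infinity> \<Rightarrow> lam_PF p)"

text \<open>Transition matrix Pi_p (note \<infinity> + 1 = \<infinity> in enat).\<close>
definition Pi_p :: "real \<Rightarrow> enat \<Rightarrow> enat \<Rightarrow> real" where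
  "Pi_p p i j =
     (if i = 0 then (if j = 1 then 1 else 0)
      else if i = 1 then (if j = 1 then p else if j = 2 then 1 - p else 0)
      else (if j = i + 1 then g_p p i else if j = 0 then 1 - g_p p i else 0))"

definition stationary_dist :: "real \<Rightarrow> enat pmf \<Rightarrow> bool" where
  "stationary_dist p \<pi> \<longleftrightarrow>
     (\<forall>t. pmf \<pi> t = (\<Sum>\<^sub>\<infinity>s. pmf \<pi> s * Pi_p p s t))"

definition S_path_M :: "(int \<Rightarrow> enat) measure" where
  "S_path_M = PiM UNIV (\<lambda>_::int. count_space (UNIV::enat set))"

definition stationary_chain_law :: "real \<Rightarrow> enat pmf \<Rightarrow> (int \<Rightarrow> enat) measure \<Rightarrow> bool" where
  "stationary_chain_law p \<pi> P \<longleftrightarrow>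
     sets P = sets S_path_M \<and> prob_space P \<and>
     (\<forall>(k::int) (xs::enat list). xs \<noteq> [] \<longrightarrow>
        emeasure P {n \<in> space P. \<forall>j < length xs. n (k + int j) = xs ! j}
        = ennreal (pmf \<pi> (xs ! 0) * (\<Prod>j < length xs - 1. Pi_p p (xs ! j) (xs ! Suc j))))"

definition tau :: "enat \<Rightarrow> bool" where
  "tau n \<longleftrightarrow> n \<in> {0, 1}"

end

theory Submission
  imports Defs
begin

definition wb :: "real \<Rightarrow> bool \<Rightarrow> real" where
  "wb p b = (if b then p else 1 - p)"

definition Wl :: "real \<Rightarrow> bool list \<Rightarrow> real" where
  "Wl p bs = prod_list (map (wb p) bs)"

definition sumL :: "nat \<Rightarrow> (bool list \<Rightarrow> real) \<Rightarrow> real" where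
  "sumL n f = (\<Sum>bs\<in>{bs::bool list. length bs = n}. f bs)"

definition prL :: "real \<Rightarrow> nat \<Rightarrow> (bool list \<Rightarrow> bool) \<Rightarrow> real" where
  "prL p n P = sumL n (\<lambda>bs. if P bs then Wl p bs else 0)"

lemma sumL_0[simp]: "sumL 0 f = f []"
  by (simp add: sumL_def)

lemma sumL_Suc: "sumL (Suc n) f = sumL n (\<lambda>bs. f (True # bs)) + sumL n (\<lambda>bs. f (False # bs))"
proof -
  let ?S = "{bs::bool list. length bs = n}"
  have eq: "{bs::bool list. length bs = Suc n} = (Cons True) ` ?S \<union> (Cons False) ` ?S"
    by (auto simp: length_Suc_conv image_def)
  have fin: "finite ?S" using finite_lists_length_eq[of "UNIV::bool set" n] by simp
  have "sumL (Suc n) f = sum f ((Cons True) ` ?S) + sum f ((Cons False) ` ?S)"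
    unfolding sumL_def eq by (rule sum.union_disjoint) (auto simp: fin)
  also have "\<dots> = sumL n (\<lambda>bs. f (True # bs)) + sumL n (\<lambda>bs. f (False # bs))"
    unfolding sumL_def by (subst sum.reindex, simp add: inj_on_def)+ simp
  finally show ?thesis .
qed

lemma sumL_cong: "(\<And>bs. length bs = n \<Longrightarrow> f bs = g bs) \<Longrightarrow> sumL n f = sumL n g"
  unfolding sumL_def by (rule sum.cong) auto

lemma sumL_add: "sumL n (\<lambda>bs. f bs + g bs) = sumL n f + sumL n g"
  unfolding sumL_def by (simp add: sum.distrib)

lemma sumL_cmult: "sumL n (\<lambda>bs. c * f bs) = c * sumL n f"
  unfolding sumL_def by (simp add: sum_distrib_left)

lemma Wl_Cons[simp]: "Wl p (b # bs) = wb p b * Wl p bs"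
  by (simp add: Wl_def)
lemma Wl_Nil[simp]: "Wl p [] = 1"
  by (simp add: Wl_def)

lemma prL_0: "prL p 0 P = (if P [] then 1 else 0)"
  by (simp add: prL_def)

lemma prL_Suc: "prL p (Suc n) P = wb p True * prL p n (\<lambda>bs. P (True # bs)) + wb p False * prL p n (\<lambda>bs. P (False # bs))"
  unfolding prL_def sumL_Suc
  by (simp add: sumL_cmult[symmetric] if_distrib cong: if_cong)

lemma prL_cong: "(\<And>bs. length bs = n \<Longrightarrow> P bs = Q bs) \<Longrightarrow> prL p n P = prL p n Q"
  unfolding prL_def by (rule sumL_cong) auto

lemma prL_split: "prL p n P = prL p n (\<lambda>bs. P bs \<and> Q bs) + prL p n (\<lambda>bs. P bs \<and> \<not> Q bs)"
  unfolding prL_def sumL_add[symmetric] by (rule sumL_cong) auto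

lemma prL_prod: "prL p (n + m) (\<lambda>zs. P (take n zs) \<and> Q (drop n zs)) = prL p n P * prL p m Q"
proof (induction n arbitrary: P)
  case 0
  then show ?case by (cases "P []") (simp_all add: prL_0 prL_def, simp add: sumL_def)
next
  case (Suc n)
  have "prL p (Suc n + m) (\<lambda>zs. P (take (Suc n) zs) \<and> Q (drop (Suc n) zs))
     = wb p True * prL p (n + m) (\<lambda>zs. P (True # take n zs) \<and> Q (drop n zs))
     + wb p False * prL p (n + m) (\<lambda>zs. P (False # take n zs) \<and> Q (drop n zs))"
    by (simp add: prL_Suc)
  also have "\<dots> = wb p True * (prL p n (\<lambda>bs. P (True # bs)) * prL p m Q)
     + wb p False * (prL p n (\<lambda>bs. P (False # bs)) * prL p m Q)"
    using Suc.IH[of "\<lambda>bs. P (True # bs)"] Suc.IH[of "\<lambda>bs. P (False # bs)"] by simp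
  also have "\<dots> = prL p (Suc n) P * prL p m Q"
    by (simp add: prL_Suc algebra_simps)
  finally show ?case .
qed

lemma prL_True: "prL p n (\<lambda>_. True) = 1"
  by (induction n) (simp_all add: prL_0 prL_Suc wb_def)

lemma prL_False: "prL p n (\<lambda>_. False) = 0"
  by (simp add: prL_def sumL_def)

context
  fixes p :: real
  assumes p0: "0 < p" and p1: "p < 1"
begin

lemma wb_nonneg: "0 \<le> wb p b"
  using p0 p1 by (simp add: wb_def)

lemma Wl_nonneg: "0 \<le> Wl p bs"
  unfolding Wl_def by (induction bs) (simp_all add: wb_nonneg)

lemma prL_nonneg: "0 \<le> prL p n P"
  unfolding prL_def sumL_def by (rule sum_nonneg) (simp add: Wl_nonneg)

lemma prL_mono: "(\<And>bs. length bs = n \<Longrightarrow> P bs \<Longrightarrow> Q bs) \<Longrightarrow> prL p n P \<le> prL p n Q"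
  unfolding prL_def sumL_def by (rule sum_mono) (auto simp: Wl_nonneg)

end

lemma prL_1: "prL p 1 (\<lambda>bs. bs ! 0) = p"
  by (simp add: prL_Suc prL_0 wb_def)
lemma prL_1n: "prL p 1 (\<lambda>bs. \<not> bs ! 0) = 1 - p"
  by (simp add: prL_Suc prL_0 wb_def)
lemma prL_1': "prL p (Suc 0) (\<lambda>bs. bs ! 0) = p"
  using prL_1 by simp
lemma prL_1n': "prL p (Suc 0) (\<lambda>bs. \<not> bs ! 0) = 1 - p"
  using prL_1n by simp
lemma prL_2: "prL p 2 (\<lambda>bs. bs ! 0 \<and> bs ! 1) = p * p"
  by (simp add: prL_Suc prL_0 wb_def numeral_2_eq_2)

definition tf :: "(nat \<Rightarrow> bool) \<Rightarrow> nat \<Rightarrow> bool" where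
  "tf f q = (f q \<and> (f (q - 1) \<or> f (Suc q)))"

definition tT :: "bool list \<Rightarrow> nat \<Rightarrow> bool" where
  "tT bs q = tf (\<lambda>i. bs ! i) q"

definition no11 :: "bool list \<Rightarrow> bool" where
  "no11 bs = (\<forall>j. Suc j < length bs \<longrightarrow> \<not> (bs ! j \<and> bs ! Suc j))"

definition hwP :: "bool list \<Rightarrow> bool list \<Rightarrow> bool" where
  "hwP w bs = (bs ! 0 \<and> (\<forall>j<length w. tT bs (Suc j) = w ! j))"

definition hw :: "real \<Rightarrow> bool list \<Rightarrow> real" where
  "hw p w = prL p (length w + 2) (hwP w)"

definition Bq :: "real \<Rightarrow> nat \<Rightarrow> real" where
  "Bq p m = prL p (Suc m) (\<lambda>bs. bs ! 0 \<and> no11 bs)"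

definition Cq :: "real \<Rightarrow> nat \<Rightarrow> real" where
  "Cq p m = prL p (Suc m) (\<lambda>bs. bs ! 0 \<and> no11 bs \<and> \<not> bs ! m)"

lemma prL_prod':
  assumes "\<And>xs ys. length xs = n \<Longrightarrow> length ys = m \<Longrightarrow> F (xs @ ys) = (P xs \<and> Q ys)"
  shows "prL p (n + m) F = prL p n P * prL p m Q"
proof -
  have "prL p (n + m) F = prL p (n + m) (\<lambda>zs. P (take n zs) \<and> Q (drop n zs))"
  proof (rule prL_cong)
    fix zs :: "bool list" assume "length zs = n + m"
    then show "F zs = (P (take n zs) \<and> Q (drop n zs))"
      using assms[of "take n zs" "drop n zs"] by simp
  qed
  then show ?thesis by (simp add: prL_prod)
qed

lemma tT_Cons: "1 \<le> q \<Longrightarrow> tT (b # ys) (Suc q) = tT ys q"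
  by (cases q) (simp_all add: tT_def tf_def)

lemma tT_append: "length xs = n \<Longrightarrow> 1 \<le> q \<Longrightarrow> tT (xs @ ys) (n + q) = tT ys q"
proof (induction xs arbitrary: n)
  case Nil then show ?case by simp
next
  case (Cons a xs)
  then obtain n' where n: "n = Suc n'" "length xs = n'" by auto
  have "tT ((a # xs) @ ys) (n + q) = tT (a # (xs @ ys)) (Suc (n' + q))" using n by simp
  also have "\<dots> = tT (xs @ ys) (n' + q)" using Cons.prems by (intro tT_Cons) simp
  also have "\<dots> = tT ys q" using Cons n by simp
  finally show ?case .
qed

lemma PF1:
  assumes r: "1 \<le> r"
  shows "(\<forall>j<r. \<not> tf f (Suc j)) \<longleftrightarrow> (\<forall>j<Suc r. \<not> (f j \<and> f (Suc j)))"
proof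
  assume H: "\<forall>j<r. \<not> tf f (Suc j)"
  show "\<forall>j<Suc r. \<not> (f j \<and> f (Suc j))"
  proof (intro allI impI notI)
    fix j assume j: "j < Suc r" and fj: "f j \<and> f (Suc j)"
    show False
    proof (cases "j < r")
      case True
      then show False using H fj by (auto simp: tf_def)
    next
      case False
      then have "j = r" using j by simp
      then obtain k where k: "r = Suc k" using r by (cases r) auto
      have "tf f (Suc k)" using fj \<open>j = r\<close> k by (simp add: tf_def)
      then show False using H k by auto
    qed
  qed
next
  assume N: "\<forall>j<Suc r. \<not> (f j \<and> f (Suc j))"
  show "\<forall>j<r. \<not> tf f (Suc j)"
  proof (intro allI impI)
    fix j assume j: "j < r"
    have "\<not> (f j \<and> f (Suc j))" using N j by simp
    moreover have "\<not> (f (Suc j) \<and> f (Suc (Suc j)))" using N j by simp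
    ultimately show "\<not> tf f (Suc j)" by (auto simp: tf_def)
  qed
qed

lemma PF:
  assumes r: "1 \<le> r"
  shows "((\<forall>j<r. \<not> tf f (Suc j)) \<and> tf f (Suc r)) \<longleftrightarrow>
         ((\<forall>j<r. \<not> (f j \<and> f (Suc j))) \<and> \<not> f r \<and> f (Suc r) \<and> f (Suc (Suc r)))"
proof
  assume A: "(\<forall>j<r. \<not> tf f (Suc j)) \<and> tf f (Suc r)"
  then have H: "\<forall>j<r. \<not> tf f (Suc j)" and T: "tf f (Suc r)" by auto
  obtain k where k: "r = Suc k" using r by (cases r) auto
  have nfr: "\<not> f r"
  proof
    assume "f r"
    then have "tf f (Suc k)" using T k by (simp add: tf_def)
    then show False using H k by auto
  qed
  moreover have "\<forall>j<r. \<not> (f j \<and> f (Suc j))"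
    using H by (auto simp: tf_def)
  ultimately show "(\<forall>j<r. \<not> (f j \<and> f (Suc j))) \<and> \<not> f r \<and> f (Suc r) \<and> f (Suc (Suc r))"
    using T by (auto simp: tf_def)
next
  assume A: "(\<forall>j<r. \<not> (f j \<and> f (Suc j))) \<and> \<not> f r \<and> f (Suc r) \<and> f (Suc (Suc r))"
  have "\<forall>j<r. \<not> tf f (Suc j)"
  proof (intro allI impI)
    fix j assume j: "j < r"
    have "\<not> (f j \<and> f (Suc j))" using A j by simp
    moreover have "\<not> (f (Suc j) \<and> f (Suc (Suc j)))"
    proof (cases "Suc j < r")
      case True then show ?thesis using A by simp
    next
      case False then have "Suc j = r" using j by simp
      then show ?thesis using A by auto
    qed
    ultimately show "\<not> tf f (Suc j)" by (auto simp: tf_def)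
  qed
  then show "(\<forall>j<r. \<not> tf f (Suc j)) \<and> tf f (Suc r)"
    using A by (simp add: tf_def)
qed

lemma no11_conv: "length bs = Suc n \<Longrightarrow> no11 bs = (\<forall>j<n. \<not> (bs ! j \<and> bs ! Suc j))"
  by (auto simp: no11_def)

lemma no11_snoc: "length xs = Suc m \<Longrightarrow> no11 (xs @ [c]) = (no11 xs \<and> \<not> (xs ! m \<and> c))"
  unfolding no11_def
  by (auto simp: nth_append less_Suc_eq)

lemma hw_Nil: "hw p [] = p"
proof -
  have "hw p [] = prL p (1 + 1) (\<lambda>zs. zs ! 0)" unfolding hw_def hwP_def by simp
  also have "\<dots> = prL p 1 (\<lambda>xs. xs ! 0) * prL p 1 (\<lambda>_. True)"
    by (rule prL_prod') (auto simp: nth_append)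
  finally show ?thesis by (simp add: prL_1 prL_1' prL_True)
qed

lemma hwP_True: "hwP (True # w) (b # ys) = (b \<and> hwP w ys)"
proof -
  have "hwP (True # w) (b # ys) = (b \<and> tT (b # ys) (Suc 0) \<and> (\<forall>j<length w. tT (b # ys) (Suc (Suc j)) = w ! j))"
    unfolding hwP_def by (simp add: All_less_Suc2)
  also have "\<dots> = (b \<and> ys ! 0 \<and> (\<forall>j<length w. tT ys (Suc j) = w ! j))"
    by (auto simp: tT_Cons) (auto simp: tT_def tf_def)
  finally show ?thesis by (simp add: hwP_def)
qed

lemma hw_True: "hw p (True # w) = p * hw p w"
proof -
  have "hw p (True # w) = prL p (1 + (length w + 2)) (hwP (True # w))"
    unfolding hw_def by simp
  also have "\<dots> = prL p 1 (\<lambda>xs. xs ! 0) * prL p (length w + 2) (hwP w)"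
  proof (rule prL_prod')
    fix xs ys :: "bool list" assume "length xs = 1" "length ys = length w + 2"
    then obtain b where "xs = [b]" by (cases xs) auto
    then show "hwP (True # w) (xs @ ys) = (xs ! 0 \<and> hwP w ys)" by (simp add: hwP_True)
  qed
  finally show ?thesis by (simp add: prL_1 prL_1' hw_def)
qed

lemma Bq_0: "Bq p 0 = p"
proof -
  have "Bq p 0 = prL p (Suc 0) (\<lambda>bs. bs ! 0)" unfolding Bq_def by (rule prL_cong) (auto simp: no11_def)
  then show ?thesis by (simp add: prL_1')
qed

lemma Cq_0: "Cq p 0 = 0"
proof -
  have "Cq p 0 = prL p (Suc 0) (\<lambda>bs. False)" unfolding Cq_def by (rule prL_cong) auto
  then show ?thesis by (simp add: prL_False)
qed

lemma Cq_Suc: "Cq p (Suc m) = (1 - p) * Bq p m"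
proof -
  have "Cq p (Suc m) = prL p (Suc m + 1) (\<lambda>bs. bs ! 0 \<and> no11 bs \<and> \<not> bs ! Suc m)"
    unfolding Cq_def by simp
  also have "\<dots> = prL p (Suc m) (\<lambda>bs. bs ! 0 \<and> no11 bs) * prL p 1 (\<lambda>bs. \<not> bs ! 0)"
  proof (rule prL_prod')
    fix xs ys :: "bool list" assume l: "length xs = Suc m" "length ys = 1"
    then obtain c where "ys = [c]" by (cases ys) auto
    then show "((xs @ ys) ! 0 \<and> no11 (xs @ ys) \<and> \<not> (xs @ ys) ! Suc m) = ((xs ! 0 \<and> no11 xs) \<and> \<not> ys ! 0)"
      using l by (auto simp: nth_append no11_snoc)
  qed
  finally show ?thesis by (simp add: prL_1n prL_1n' Bq_def)
qed

lemma Bq_Suc: "Bq p (Suc m) = Cq p (Suc m) + p * Cq p m"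
proof -
  have "Bq p (Suc m) = prL p (Suc (Suc m)) (\<lambda>bs. (bs ! 0 \<and> no11 bs) \<and> bs ! Suc m)
     + prL p (Suc (Suc m)) (\<lambda>bs. (bs ! 0 \<and> no11 bs) \<and> \<not> bs ! Suc m)"
    unfolding Bq_def by (rule prL_split)
  also have "prL p (Suc (Suc m)) (\<lambda>bs. (bs ! 0 \<and> no11 bs) \<and> \<not> bs ! Suc m) = Cq p (Suc m)"
    unfolding Cq_def by (rule prL_cong) auto
  also have "prL p (Suc (Suc m)) (\<lambda>bs. (bs ! 0 \<and> no11 bs) \<and> bs ! Suc m)
     = prL p (Suc m + 1) (\<lambda>bs. (bs ! 0 \<and> no11 bs) \<and> bs ! Suc m)" by simp
  also have "\<dots> = prL p (Suc m) (\<lambda>bs. bs ! 0 \<and> no11 bs \<and> \<not> bs ! m) * prL p 1 (\<lambda>bs. bs ! 0)"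
  proof (rule prL_prod')
    fix xs ys :: "bool list" assume l: "length xs = Suc m" "length ys = 1"
    then obtain c where "ys = [c]" by (cases ys) auto
    then show "(((xs @ ys) ! 0 \<and> no11 (xs @ ys)) \<and> (xs @ ys) ! Suc m) = ((xs ! 0 \<and> no11 xs \<and> \<not> xs ! m) \<and> ys ! 0)"
      using l by (auto simp: nth_append no11_snoc)
  qed
  finally show ?thesis by (simp add: prL_1 prL_1' Cq_def algebra_simps)
qed

lemma Bq_1: "Bq p 1 = p * (1 - p)"
  using Bq_Suc[of p 0] Cq_Suc[of p 0] by (simp add: Cq_0 Bq_0)

lemma Bq_rec: "Bq p (Suc (Suc m)) = (1 - p) * Bq p (Suc m) + p * (1 - p) * Bq p m"
  using Bq_Suc[of p "Suc m"] Cq_Suc[of p "Suc m"] Cq_Suc[of p m] by simp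

lemma Cq_eq: "p * p * Cq p r = Bq p (Suc r) - Bq p (Suc (Suc r))"
proof -
  have e1: "Bq p (Suc (Suc r)) = (1 - p) * Bq p (Suc r) + p * Cq p (Suc r)"
    using Bq_Suc[of p "Suc r"] Cq_Suc[of p "Suc r"] by simp
  have e2: "p * Cq p r = Bq p (Suc r) - Cq p (Suc r)"
    using Bq_Suc[of p r] by simp
  have "p * p * Cq p r = p * (Bq p (Suc r) - Cq p (Suc r))" using e2 by (simp add: mult.assoc)
  also have "\<dots> = Bq p (Suc r) - Bq p (Suc (Suc r))" using e1 by (simp add: algebra_simps)
  finally show ?thesis .
qed

lemma all_less_add_split: "(\<forall>j<(a::nat)+b. P j) = ((\<forall>j<a. P j) \<and> (\<forall>i<b. P (a+i)))"
proof (intro iffI conjI allI impI)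
  fix j assume H: "(\<forall>j<a. P j) \<and> (\<forall>i<b. P (a+i))" and j: "j < a + b"
  show "P j"
  proof (cases "j < a")
    case True then show ?thesis using H by auto
  next
    case False
    then have "j = a + (j - a)" "j - a < b" using j by auto
    then show ?thesis using H by metis
  qed
qed auto

lemma hw_zeros: assumes r: "1 \<le> r" shows "hw p (replicate r False) = Bq p (Suc r)"
  unfolding Bq_def hw_def length_replicate add_2_eq_Suc'
proof (rule prL_cong)
  fix bs :: "bool list" assume l: "length bs = Suc (Suc r)"
  have "hwP (replicate r False) bs = (bs ! 0 \<and> (\<forall>j<r. \<not> tf (\<lambda>i. bs ! i) (Suc j)))"
    by (simp add: hwP_def tT_def)
  also have "\<dots> = (bs ! 0 \<and> (\<forall>j<Suc r. \<not> (bs ! j \<and> bs ! Suc j)))"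
    using PF1[OF r] by simp
  also have "\<dots> = (bs ! 0 \<and> no11 bs)" using l by (simp add: no11_conv)
  finally show "hwP (replicate r False) bs = (bs ! 0 \<and> no11 bs)" .
qed

lemma hwP_EG:
  assumes r: "1 \<le> r" and lx: "length xs = Suc r" and ly: "length ys = Suc (length v)"
  shows "hwP (replicate r False @ True # v) (xs @ c # ys) =
         ((xs ! 0 \<and> no11 xs \<and> \<not> xs ! r) \<and> (hwP v (c # ys) \<and> ys ! 0))"
proof -
  define zs where "zs = xs @ c # ys"
  define f where "f = (\<lambda>i. zs ! i)"
  have f_lo: "f j = xs ! j" if "j \<le> r" for j using that lx by (simp add: f_def zs_def nth_append)
  have f_r1: "f (Suc r) = c" using lx by (simp add: f_def zs_def nth_append)
  have f_r2: "f (Suc (Suc r)) = ys ! 0" using lx by (simp add: f_def zs_def nth_append)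
  have tail: "tT zs (Suc (Suc r) + i) = tT (c # ys) (Suc i)" for i
    using tT_append[of xs "Suc r" "Suc i" "c # ys"] lx by (simp add: zs_def)
  have s1: "hwP (replicate r False @ True # v) zs =
        (f 0 \<and> (\<forall>j<r + Suc (length v). tf f (Suc j) = (replicate r False @ True # v) ! j))"
    by (simp add: hwP_def tT_def f_def)
  have s2: "(\<forall>j<r + Suc (length v). tf f (Suc j) = (replicate r False @ True # v) ! j) =
     (((\<forall>j<r. \<not> tf f (Suc j)) \<and> tf f (Suc r)) \<and> (\<forall>i<length v. tT (c # ys) (Suc i) = v ! i))"
  proof -
    have "(\<forall>j<r + Suc (length v). tf f (Suc j) = (replicate r False @ True # v) ! j) =
          ((\<forall>j<r. tf f (Suc j) = (replicate r False @ True # v) ! j) \<and>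
           (\<forall>i<Suc (length v). tf f (Suc (r + i)) = (replicate r False @ True # v) ! (r + i)))"
      by (rule all_less_add_split)
    also have "\<dots> = ((\<forall>j<r. \<not> tf f (Suc j)) \<and>
           (\<forall>i<Suc (length v). tf f (Suc (r + i)) = (True # v) ! i))"
      by (simp add: nth_append)
    also have "(\<forall>i<Suc (length v). tf f (Suc (r + i)) = (True # v) ! i) =
               (tf f (Suc r) \<and> (\<forall>i<length v. tf f (Suc (r + Suc i)) = v ! i))"
      by (simp add: All_less_Suc2)
    also have "(\<forall>i<length v. tf f (Suc (r + Suc i)) = v ! i) = (\<forall>i<length v. tT (c # ys) (Suc i) = v ! i)"
      using tail by (simp add: tT_def f_def)
    finally show ?thesis by simp
  qed
  have s3: "((\<forall>j<r. \<not> tf f (Suc j)) \<and> tf f (Suc r)) \<longleftrightarrow>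
       ((\<forall>j<r. \<not> (f j \<and> f (Suc j))) \<and> \<not> f r \<and> f (Suc r) \<and> f (Suc (Suc r)))"
    using PF[OF r] by simp
  have s4: "(\<forall>j<r. \<not> (f j \<and> f (Suc j))) = no11 xs"
    using lx f_lo by (simp add: no11_conv)
  have "hwP (replicate r False @ True # v) zs =
     (f 0 \<and> (no11 xs \<and> \<not> f r \<and> f (Suc r) \<and> f (Suc (Suc r))) \<and>
       (\<forall>i<length v. tT (c # ys) (Suc i) = v ! i))"
    unfolding s1 s2 s3 s4 by simp
  then show ?thesis
    using f_lo[of 0] f_lo[of r] f_r1 f_r2 by (auto simp: zs_def hwP_def)
qed

definition dl :: "enat \<Rightarrow> bool \<Rightarrow> enat" where
  "dl s b = (if b then (if s \<le> 1 then 1 else 0) else (if s \<le> 1 then 2 else s + 1))"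

primrec Fw :: "real \<Rightarrow> enat \<Rightarrow> bool list \<Rightarrow> real" where
  "Fw p s [] = 1"
| "Fw p s (b # w) = Pi_p p s (dl s b) * Fw p (dl s b) w"

primrec dls :: "enat \<Rightarrow> bool list \<Rightarrow> enat" where
  "dls s [] = s"
| "dls s (b # w) = dls (dl s b) w"

lemma Fw_append: "Fw p s (u @ v) = Fw p s u * Fw p (dls s u) v"
  by (induction u arbitrary: s) simp_all

lemma dls_zeros: "dls 1 (replicate k False) = enat (Suc k)"
proof -
  have "dls (enat (Suc n)) (replicate k False) = enat (Suc n + k)" for n
  proof (induction k arbitrary: n)
    case 0 then show ?case by simp
  next
    case (Suc k)
    have "dl (enat (Suc n)) False = enat (Suc (Suc n))"
      by (cases n) (simp_all add: dl_def one_enat_def numeral_eq_enat)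
    then show ?case using Suc.IH[of "Suc n"] by simp
  qed
  from this[of 0] show ?thesis by (simp add: one_enat_def)
qed

lemma Pi_0_1: "Pi_p p 0 1 = 1" by (simp add: Pi_p_def)
lemma Pi_0_2: "Pi_p p 0 2 = 0" by (simp add: Pi_p_def)
lemma Pi_1_1: "Pi_p p 1 1 = p" by (simp add: Pi_p_def)
lemma Pi_1_2: "Pi_p p 1 2 = 1 - p" by (simp add: Pi_p_def)
lemma Pi_n_Suc: "2 \<le> n \<Longrightarrow> Pi_p p (enat n) (enat (Suc n)) = g_p p (enat n)"
  by (simp add: Pi_p_def one_enat_def zero_enat_def)
lemma Pi_n_0: "2 \<le> n \<Longrightarrow> Pi_p p (enat n) 0 = 1 - g_p p (enat n)"
  by (simp add: Pi_p_def one_enat_def zero_enat_def)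

lemma dl_1_True: "dl 1 True = 1" by (simp add: dl_def)
lemma dl_0_True: "dl 0 True = 1" by (simp add: dl_def)
lemma dl_0_False: "dl 0 False = 2" by (simp add: dl_def)
lemma dl_n_True: "2 \<le> n \<Longrightarrow> dl (enat n) True = 0" by (simp add: dl_def one_enat_def)

lemma Fw_zeros_Suc:
  "Fw p 1 (replicate (Suc k) False) = Fw p 1 (replicate k False) * Pi_p p (enat (Suc k)) (enat (Suc (Suc k)))"
proof -
  have "replicate (Suc k) False = replicate k False @ [False]" by (simp add: replicate_append_same)
  then have "Fw p 1 (replicate (Suc k) False) = Fw p 1 (replicate k False) * Fw p (enat (Suc k)) [False]"
    by (simp add: Fw_append dls_zeros)
  moreover have "dl (enat (Suc k)) False = enat (Suc (Suc k))"
    by (cases k) (simp_all add: dl_def one_enat_def numeral_eq_enat)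
  ultimately show ?thesis by simp
qed

context
  fixes p :: real
  assumes p0: "0 < p" and p1: "p < 1"
begin

definition sq where "sq = sqrt ((1 - p) * (3 * p + 1))"
definition LL where "LL = lam_PF p"
definition RR where "RR = lam_r p"

lemma sq_sq: "sq * sq = (1 - p) * (3 * p + 1)"
  unfolding sq_def using p0 p1 by (simp add: real_sqrt_mult_self)

lemma sq_nonneg: "0 \<le> sq" unfolding sq_def using p0 p1 by simp

lemma sq_gt: "1 - p < sq"
proof -
  have "(1 - p) * (1 - p) < (1 - p) * (3 * p + 1)" using p0 p1 by (intro mult_strict_left_mono) auto
  then show ?thesis unfolding sq_def by (intro real_less_rsqrt) (simp add: power2_eq_square)
qed

lemma sq_lt: "sq < 1 + p"
proof -
  have e: "(1 + p) * (1 + p) - (1 - p) * (3 * p + 1) = 4 * (p * p)" by (simp add: algebra_simps)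
  have "0 < p * p" using p0 by simp
  then have "(1 - p) * (3 * p + 1) < (1 + p) * (1 + p)" using e by linarith
  then show ?thesis unfolding sq_def using p0 by (intro real_less_lsqrt) (simp_all add: power2_eq_square)
qed

lemma LL_def': "LL = (1 - p + sq) / 2" by (simp add: LL_def lam_PF_def sq_def)
lemma RR_def': "RR = (1 - p - sq) / 2" by (simp add: RR_def lam_r_def sq_def)

lemma LL_pos: "0 < LL" using sq_gt p1 by (simp add: LL_def')
lemma LL_lt1: "LL < 1" using sq_lt by (simp add: LL_def')
lemma RR_neg: "RR < 0" using sq_gt by (simp add: RR_def')
lemma RR_gt: "- 1 < RR" using sq_lt p1 by (simp add: RR_def')
lemma LR_sum: "LL + RR = 1 - p" by (simp add: LL_def' RR_def' field_simps)
lemma LR_abs: "- RR < LL" using LR_sum p1 by simp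
lemma LL_sq: "LL * LL = (1 - p) * LL + p * (1 - p)"
proof -
  have x: "2 * LL = 1 - p + sq" by (simp add: LL_def')
  have "4 * (LL * LL - (1 - p) * LL - p * (1 - p)) =
        (2 * LL) * (2 * LL) - 2 * (1 - p) * (2 * LL) - 4 * p * (1 - p)" by (simp add: algebra_simps)
  also have "\<dots> = sq * sq - (1 - p) * (3 * p + 1)" unfolding x by (simp add: algebra_simps)
  also have "\<dots> = 0" using sq_sq by simp
  finally show ?thesis by simp
qed
lemma RR_sq: "RR * RR = (1 - p) * RR + p * (1 - p)"
proof -
  have x: "2 * RR = 1 - p - sq" by (simp add: RR_def')
  have "4 * (RR * RR - (1 - p) * RR - p * (1 - p)) =
        (2 * RR) * (2 * RR) - 2 * (1 - p) * (2 * RR) - 4 * p * (1 - p)" by (simp add: algebra_simps)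
  also have "\<dots> = sq * sq - (1 - p) * (3 * p + 1)" unfolding x by (simp add: algebra_simps)
  also have "\<dots> = 0" using sq_sq by simp
  finally show ?thesis by simp
qed

definition EE :: "nat \<Rightarrow> real" where
  "EE m = LL ^ m / (1 - LL) - RR ^ m / (1 - RR)"

lemma EE_rec: "EE (Suc (Suc m)) = (1 - p) * EE (Suc m) + p * (1 - p) * EE m"
proof -
  have a: "LL ^ Suc (Suc m) = (1 - p) * LL ^ Suc m + p * (1 - p) * LL ^ m"
    using LL_sq by (simp add: algebra_simps) (metis mult.assoc mult.commute distrib_left)
  have b: "RR ^ Suc (Suc m) = (1 - p) * RR ^ Suc m + p * (1 - p) * RR ^ m"
    using RR_sq by (simp add: algebra_simps) (metis mult.assoc mult.commute distrib_left)
  have gen: "\<And>A B C D a b d1 d2 :: real. (a*A + b*B)/d1 - (a*C + b*D)/d2 = a*(A/d1 - C/d2) + b*(B/d1 - D/d2)"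
    by (simp add: add_divide_distrib right_diff_distrib)
  show ?thesis unfolding EE_def a b gen ..
qed

lemma EE_pos: "0 < EE m"
proof -
  have "RR ^ m \<le> \<bar>RR\<bar> ^ m" by (metis power_abs abs_ge_self)
  also have "\<bar>RR\<bar> ^ m \<le> LL ^ m" using LR_abs RR_neg by (intro power_mono) auto
  finally have r1: "RR ^ m \<le> LL ^ m" .
  have "RR ^ m / (1 - RR) \<le> LL ^ m"
  proof (cases "RR ^ m \<le> 0")
    case True then show ?thesis using RR_neg LL_pos
      by (metis diff_gt_0_iff_gt divide_nonpos_pos dual_order.trans less_trans zero_le_power less_eq_real_def zero_less_one)
  next
    case False
    then have pos: "0 < RR ^ m" by simp
    have "RR ^ m * 1 \<le> RR ^ m * (1 - RR)" using pos RR_neg by (intro mult_left_mono) auto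
    then have "RR ^ m / (1 - RR) \<le> RR ^ m" using RR_neg by (simp add: divide_le_eq)
    then show ?thesis using r1 by simp
  qed
  moreover have "LL ^ m < LL ^ m / (1 - LL)"
    using LL_pos LL_lt1 by (simp add: less_divide_eq)
  ultimately show ?thesis unfolding EE_def by simp
qed

lemma EE_01: "EE 1 = EE 0"
  unfolding EE_def using LL_lt1 RR_neg by (simp add: field_simps)

lemma a_ratio_eq: "a_ratio p = RR / LL" by (simp add: a_ratio_def LL_def RR_def)

lemma g_EE: assumes n: "2 \<le> n" shows "g_p p (enat n) = EE n / EE (n - 1)"
proof -
  obtain k where k: "n = Suc k" "1 \<le> k" using n by (cases n) auto
  have A: "\<bar>a_ratio p\<bar> = - (RR / LL)" using a_ratio_eq RR_neg LL_pos
    by (simp add: abs_if divide_neg_pos)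
  have np: "(-1::real) ^ Suc j * (- x) ^ j = - (x ^ j)" for j x
    by (induction j) (simp_all add: algebra_simps)
  have p1': "(-1::real) ^ (n + 1) * \<bar>a_ratio p\<bar> ^ n = - ((RR / LL) ^ n)"
    unfolding A using np[of n "RR / LL"] by simp
  have p2': "(-1::real) ^ n * \<bar>a_ratio p\<bar> ^ (n - 1) = - ((RR / LL) ^ (n - 1))"
    unfolding A using k np[of k "RR / LL"] by simp
  have g: "g_p p (enat n) = (- ((RR / LL) ^ n) * (LL / (1 - RR)) + LL / (1 - LL)) /
                        (- ((RR / LL) ^ (n - 1)) * (1 / (1 - RR)) + 1 / (1 - LL))"
    using n p1' p2' by (simp add: g_p_def LL_def RR_def)
  define a where "a = RR / LL"
  define q where "q = n - 1"
  have nq: "n = Suc q" using k by (simp add: q_def)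
  have Rm: "RR ^ m = a ^ m * LL ^ m" for m
    using LL_pos by (simp add: a_def power_divide)
  have EEa: "EE m = LL ^ m * (1 / (1 - LL) - a ^ m / (1 - RR))" for m
    unfolding EE_def Rm by (simp add: right_diff_distrib)
  have g2: "g_p p (enat n) = (LL * (1 / (1 - LL) - a ^ n / (1 - RR))) / (1 / (1 - LL) - a ^ q / (1 - RR))"
  proof -
    have num: "- (a ^ n) * (LL / (1 - RR)) + LL / (1 - LL) = LL * (1 / (1 - LL) - a ^ n / (1 - RR))"
      by (simp add: right_diff_distrib)
    have den: "- (a ^ q) * (1 / (1 - RR)) + 1 / (1 - LL) = 1 / (1 - LL) - a ^ q / (1 - RR)"
      by simp
    show ?thesis unfolding g a_def[symmetric] q_def[symmetric] num den ..
  qed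
  have Lq: "LL ^ q \<noteq> 0" using LL_pos by simp
  have "EE n / EE (n - 1) = (LL ^ q * (LL * (1 / (1 - LL) - a ^ n / (1 - RR)))) / (LL ^ q * (1 / (1 - LL) - a ^ q / (1 - RR)))"
  proof -
    have q1: "n - 1 = q" by (simp add: q_def)
    show ?thesis unfolding q1 EEa unfolding nq power_Suc by (simp add: ac_simps)
  qed
  also have "\<dots> = (LL * (1 / (1 - LL) - a ^ n / (1 - RR))) / (1 / (1 - LL) - a ^ q / (1 - RR))"
    using Lq by (rule mult_divide_mult_cancel_left)
  finally show ?thesis using g2 by simp
qed

lemma Bq_2: "Bq p 2 = p * (1 - p)"
proof -
  have "Bq p 2 = (1 - p) * (p * (1 - p)) + p * (1 - p) * p"
    using Bq_rec[of p 0] Bq_1[of p] by (simp add: Bq_0 numeral_2_eq_2)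
  also have "\<dots> = p * (1 - p)" by algebra
  finally show ?thesis .
qed

lemma Bq_closed_aux: "1 \<le> m \<Longrightarrow> Bq p m = p * (1 - p) / EE 1 * EE (m - 1) \<and> Bq p (Suc m) = p * (1 - p) / EE 1 * EE m"
proof (induction m rule: nat_induct_at_least)
  case base
  have "Bq p 2 = p * (1 - p)" by (rule Bq_2)
  moreover have "Bq p 1 = p * (1 - p)" by (rule Bq_1)
  ultimately show ?case using EE_pos[of 1] EE_01 by (simp add: numeral_2_eq_2)
next
  case (Suc m)
  obtain k where k: "m = Suc k" using Suc.hyps by (cases m) auto
  define c where "c = p * (1 - p) / EE 1"
  have i1: "Bq p m = c * EE k" and i2: "Bq p (Suc m) = c * EE m" using Suc.IH k by (simp_all add: c_def)
  have "Bq p (Suc (Suc m)) = (1 - p) * Bq p (Suc m) + p * (1 - p) * Bq p m" by (rule Bq_rec)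
  also have "\<dots> = c * ((1 - p) * EE m + p * (1 - p) * EE k)"
    unfolding i1 i2 by (simp add: algebra_simps)
  also have "(1 - p) * EE m + p * (1 - p) * EE k = EE (Suc m)" using EE_rec[of k] k by simp
  finally show ?case using i2 by (simp add: c_def)
qed

lemma Bq_closed: "1 \<le> m \<Longrightarrow> Bq p m = p * (1 - p) * EE (m - 1) / EE 1"
  using Bq_closed_aux by simp


lemma Bq_pos: "0 < Bq p m"
proof (cases m)
  case 0 then show ?thesis using Bq_0 p0 by simp
next
  case (Suc k)
  then show ?thesis using Bq_closed[of m] EE_pos[of k] EE_pos[of 1] p0 p1 by simp
qed

lemma g_Bq: assumes n: "2 \<le> n" shows "g_p p (enat n) = Bq p (Suc n) / Bq p n"
proof -
  define c where "c = p * (1 - p) / EE 1"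
  have c: "c \<noteq> 0" using p0 p1 EE_pos[of 1] by (simp add: c_def)
  have b1: "Bq p n = c * EE (n - 1)" using Bq_closed[of n] n by (simp add: c_def)
  have b2: "Bq p (Suc n) = c * EE n" using Bq_closed[of "Suc n"] by (simp add: c_def)
  show ?thesis unfolding b1 b2 g_EE[OF n] using c by simp
qed

lemma Fw_zeros: "1 \<le> r \<Longrightarrow> p * Fw p 1 (replicate r False) = Bq p (Suc r)"
proof (induction r rule: nat_induct_at_least)
  case base
  have "Fw p 1 [False] = 1 - p" by (simp add: dl_def Pi_1_2)
  moreover have "Bq p 2 = p * (1 - p)" by (rule Bq_2)
  ultimately show ?case by (simp add: numeral_2_eq_2)
next
  case (Suc r)
  have "p * Fw p 1 (replicate (Suc r) False) = p * (Fw p 1 (replicate r False) * Pi_p p (enat (Suc r)) (enat (Suc (Suc r))))"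
    by (simp only: Fw_zeros_Suc)
  also have "\<dots> = p * Fw p 1 (replicate r False) * g_p p (enat (Suc r))"
    using Suc.hyps by (simp add: Pi_n_Suc)
  also have "\<dots> = Bq p (Suc r) * (Bq p (Suc (Suc r)) / Bq p (Suc r))"
    using Suc.IH Suc.hyps g_Bq[of "Suc r"] by simp
  also have "\<dots> = Bq p (Suc (Suc r))" using Bq_pos[of "Suc r"] by simp
  finally show ?case .
qed

end

context
  fixes p :: real
  assumes p0: "0 < p" and p1: "p < 1"
begin

lemma Q_val:
  assumes IH: "\<And>u. length u < length v \<Longrightarrow> hw p u = p * Fw p 1 u"
  shows "prL p (Suc (Suc (length v))) (\<lambda>u. hwP v u \<and> u ! 1) = p * p * Fw p 0 v"
proof (cases v)
  case Nil
  have "prL p (Suc (Suc (length v))) (\<lambda>u. hwP v u \<and> u ! 1) = prL p 2 (\<lambda>bs. bs ! 0 \<and> bs ! 1)"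
    using Nil by (simp add: hwP_def numeral_2_eq_2)
  then show ?thesis using Nil prL_2[of p] by simp
next
  case (Cons b v'')
  show ?thesis
  proof (cases b)
    case False
    have "prL p (Suc (Suc (length v))) (\<lambda>u. hwP v u \<and> u ! 1) = prL p (Suc (Suc (length v))) (\<lambda>_. False)"
    proof (rule prL_cong)
      fix u :: "bool list" assume "length u = Suc (Suc (length v))"
      show "(hwP v u \<and> u ! 1) = False"
        using Cons False by (auto simp: hwP_def tT_def tf_def)
    qed
    moreover have "Fw p 0 v = 0" using Cons False by (simp add: dl_0_False Pi_0_2)
    ultimately show ?thesis by (simp add: prL_False)
  next
    case True
    have "prL p (Suc (Suc (length v))) (\<lambda>u. hwP v u \<and> u ! 1) = hw p v"
      unfolding hw_def add_2_eq_Suc'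
    proof (rule prL_cong)
      fix u :: "bool list" assume "length u = Suc (Suc (length v))"
      show "(hwP v u \<and> u ! 1) = hwP v u"
        using Cons True by (auto simp: hwP_def tT_def tf_def)
    qed
    also have "\<dots> = p * hw p v''" using Cons True by (simp add: hw_True)
    also have "\<dots> = p * (p * Fw p 1 v'')" using IH[of v''] Cons by simp
    finally show ?thesis using Cons True by (simp add: dl_0_True Pi_0_1)
  qed
qed

lemma hw_main: "hw p w = p * Fw p 1 w"
proof (induction "length w" arbitrary: w rule: less_induct)
  case less
  define r where "r = length (takeWhile Not w)"
  define v where "v = dropWhile Not w"
  have tw: "takeWhile Not w = replicate r False"
    unfolding r_def by (rule replicate_length_same[symmetric]) (auto dest: set_takeWhileD)
  have wv: "w = replicate r False @ v"
    using takeWhile_dropWhile_id[of Not w] unfolding tw v_def by simp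
  have hv: "v = [] \<or> hd v" using hd_dropWhile[of Not w] unfolding v_def by auto
  show ?case
  proof (cases "r = 0")
    case True
    then have wv': "w = v" using wv by simp
    show ?thesis
    proof (cases v)
      case Nil then show ?thesis using wv' by (simp add: hw_Nil)
    next
      case (Cons b v')
      then have b: b using hv by simp
      have "hw p w = p * hw p v'" using wv' Cons b by (simp add: hw_True)
      also have "\<dots> = p * (p * Fw p 1 v')" using less[of v'] wv' Cons by simp
      finally show ?thesis using wv' Cons b by (simp add: dl_1_True Pi_1_1)
    qed
  next
    case False
    then have r: "1 \<le> r" by simp
    show ?thesis
    proof (cases v)
      case Nil
      then show ?thesis using wv hw_zeros[OF r, of p] Fw_zeros[OF p0 p1 r] by simp
    next
      case (Cons b v')
      then have b: b using hv by simp
      have wv2: "w = replicate r False @ True # v'" using wv Cons b by simp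
      define Q where "Q = prL p (Suc (Suc (length v'))) (\<lambda>u. hwP v' u \<and> u ! 1)"
      have "hw p w = prL p (Suc r + Suc (Suc (length v'))) (hwP (replicate r False @ True # v'))"
        unfolding hw_def wv2 by simp
      also have "\<dots> = Cq p r * Q"
        unfolding Cq_def Q_def
      proof (rule prL_prod')
        fix xs us :: "bool list" assume lx: "length xs = Suc r" and lu: "length us = Suc (Suc (length v'))"
        then obtain c ys where us: "us = c # ys" and ly: "length ys = Suc (length v')" by (cases us) auto
        show "hwP (replicate r False @ True # v') (xs @ us) = ((xs ! 0 \<and> no11 xs \<and> \<not> xs ! r) \<and> (hwP v' us \<and> us ! 1))"
          unfolding us using hwP_EG[OF r lx ly] by simp
      qed
      also have "Q = p * p * Fw p 0 v'"
        unfolding Q_def by (rule Q_val) (use less wv2 in simp)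
      finally have hwv: "hw p w = Cq p r * (p * p * Fw p 0 v')" .
      have Fw1: "Fw p 1 w = Fw p 1 (replicate r False) * (1 - g_p p (enat (Suc r))) * Fw p 0 v'"
        unfolding wv2 Fw_append dls_zeros using r by (simp add: dl_n_True Pi_n_0)
      have "p * Fw p 1 w = Bq p (Suc r) * (1 - Bq p (Suc (Suc r)) / Bq p (Suc r)) * Fw p 0 v'"
        unfolding Fw1 using Fw_zeros[OF p0 p1 r] g_Bq[OF p0 p1, of "Suc r"] r
        by (simp add: mult.assoc)
      also have "\<dots> = (Bq p (Suc r) - Bq p (Suc (Suc r))) * Fw p 0 v'"
        using Bq_pos[OF p0 p1, of "Suc r"] by (simp add: field_simps)
      also have "\<dots> = p * p * Cq p r * Fw p 0 v'" using Cq_eq[of p r] by simp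
      finally have fin: "p * Fw p 1 w = p * p * Cq p r * Fw p 0 v'" .
      show ?thesis unfolding hwv fin by (simp add: ac_simps)
    qed
  qed
qed

end

lemma space_Omega: "space Omega_M = UNIV"
  by (simp add: Omega_M_def space_PiM)
lemma space_mu: "space (mu_p p) = UNIV"
  by (simp add: mu_p_def space_PiM)
lemma space_S: "space S_path_M = UNIV"
  by (simp add: S_path_M_def space_PiM)
lemma sets_mu: "sets (mu_p p) = sets Omega_M"
  unfolding mu_p_def Omega_M_def by (rule sets_PiM_cong) auto
lemma prob_mu: "prob_space (mu_p p)"
  unfolding mu_p_def by (intro prob_space_PiM) (simp add: prob_space_measure_pmf)

lemma meas_mu_cong: "f \<in> measurable Omega_M N \<Longrightarrow> f \<in> measurable (mu_p p) N"
  using measurable_cong_sets[OF sets_mu[symmetric, of p] refl] by blast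

lemma T_map_meas: "T_map \<in> measurable Omega_M Omega_M"
proof -
  have "(\<lambda>\<omega> i. T_map \<omega> i) \<in> measurable Omega_M (PiM UNIV (\<lambda>_::int. count_space (UNIV::bool set)))"
    by (rule measurable_PiM_single') (auto simp: T_map_def Omega_M_def)
  then show ?thesis by (simp add: Omega_M_def)
qed

definition win :: "(int \<Rightarrow> bool) \<Rightarrow> int \<Rightarrow> nat \<Rightarrow> bool list" where
  "win \<omega> a n = map (\<lambda>q. \<omega> (a + int q)) [0..<n]"

lemma length_win[simp]: "length (win \<omega> a n) = n" by (simp add: win_def)
lemma nth_win[simp]: "q < n \<Longrightarrow> win \<omega> a n ! q = \<omega> (a + int q)" by (simp add: win_def)

lemma win_add: "win \<omega> a (n + m) = win \<omega> a n @ win \<omega> (a + int n) m"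
  by (rule nth_equalityI) (auto simp: nth_append)

lemma Wl_prod: "Wl p bs = (\<Prod>q<length bs. wb p (bs ! q))"
  by (induction bs) (simp_all del: prod.lessThan_Suc add: prod.lessThan_Suc_shift)


lemma image_shift_int: "(\<lambda>q. a + int q) ` {..<n} = {a..<a + int n}"
proof (intro set_eqI iffI)
  fix j assume "j \<in> {a..<a + int n}"
  then have "j = a + int (nat (j - a))" "nat (j - a) < n" by auto
  then show "j \<in> (\<lambda>q. a + int q) ` {..<n}" by blast
qed auto

context
  fixes p :: real
  assumes p0: "0 < p" and p1: "p < 1"
begin

lemma win_eq_emb:
  assumes "length bs = n"
  shows "{\<omega>. win \<omega> a n = bs} = prod_emb UNIV (\<lambda>_::int. measure_pmf (bernoulli_pmf p)) {a..<a + int n}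
            (Pi\<^sub>E {a..<a + int n} (\<lambda>j. {bs ! nat (j - a)}))"
proof (intro set_eqI)
  fix \<omega> :: "int \<Rightarrow> bool"
  have "win \<omega> a n = bs \<longleftrightarrow> (\<forall>q<n. \<omega> (a + int q) = bs ! q)"
    using assms by (auto simp: list_eq_iff_nth_eq)
  also have "\<dots> \<longleftrightarrow> (\<forall>j\<in>{a..<a + int n}. \<omega> j = bs ! nat (j - a))"
  proof
    assume H: "\<forall>q<n. \<omega> (a + int q) = bs ! q"
    show "\<forall>j\<in>{a..<a + int n}. \<omega> j = bs ! nat (j - a)"
    proof
      fix j assume "j \<in> {a..<a + int n}"
      then have "j = a + int (nat (j - a))" "nat (j - a) < n" by auto
      then show "\<omega> j = bs ! nat (j - a)" using H by metis
    qed
  next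
    assume H: "\<forall>j\<in>{a..<a + int n}. \<omega> j = bs ! nat (j - a)"
    show "\<forall>q<n. \<omega> (a + int q) = bs ! q"
    proof (intro allI impI)
      fix q assume "q < n"
      then have "a + int q \<in> {a..<a + int n}" by auto
      then show "\<omega> (a + int q) = bs ! q" using H by fastforce
    qed
  qed
  finally show "\<omega> \<in> {\<omega>. win \<omega> a n = bs} \<longleftrightarrow> \<omega> \<in> prod_emb UNIV (\<lambda>_::int. measure_pmf (bernoulli_pmf p)) {a..<a + int n}
            (Pi\<^sub>E {a..<a + int n} (\<lambda>j. {bs ! nat (j - a)}))"
    by (simp add: prod_emb_iff PiE_iff)
qed

lemma emeasure_win_eq:
  assumes "length bs = n"
  shows "emeasure (mu_p p) {\<omega>. win \<omega> a n = bs} = ennreal (Wl p bs)"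
proof -
  have "emeasure (mu_p p) {\<omega>. win \<omega> a n = bs} =
        (\<Prod>j\<in>{a..<a + int n}. emeasure (measure_pmf (bernoulli_pmf p)) {bs ! nat (j - a)})"
    unfolding win_eq_emb[OF assms] mu_p_def
    by (rule emeasure_PiM_emb) (auto simp: prob_space_measure_pmf)
  also have "\<dots> = (\<Prod>j\<in>{a..<a + int n}. ennreal (wb p (bs ! nat (j - a))))"
    using p0 p1 by (intro prod.cong refl) (simp add: emeasure_pmf_single wb_def)
  also have "\<dots> = ennreal (\<Prod>j\<in>{a..<a + int n}. wb p (bs ! nat (j - a)))"
    by (rule prod_ennreal) (simp add: wb_nonneg[OF p0 p1])
  also have "(\<Prod>j\<in>{a..<a + int n}. wb p (bs ! nat (j - a))) = (\<Prod>q<n. wb p (bs ! q))"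
    unfolding image_shift_int[symmetric] by (subst prod.reindex) (auto simp: inj_on_def)
  also have "\<dots> = Wl p bs" using assms by (simp add: Wl_prod)
  finally show ?thesis .
qed

lemma bridge: "emeasure (mu_p p) {\<omega>. P (win \<omega> a n)} = ennreal (prL p n P)"
proof -
  define S where "S = {bs::bool list. length bs = n \<and> P bs}"
  have finS: "finite S" unfolding S_def
    using finite_lists_length_eq[of "UNIV::bool set" n] by (rule rev_finite_subset) auto
  have U: "{\<omega>. P (win \<omega> a n)} = (\<Union>bs\<in>S. {\<omega>. win \<omega> a n = bs})"
    by (auto simp: S_def)
  have meas: "{\<omega>. win \<omega> a n = bs} \<in> sets (mu_p p)" if "bs \<in> S" for bs
  proof -
    have l: "length bs = n" using that by (simp add: S_def)
    show ?thesis unfolding win_eq_emb[OF l, of a] mu_p_def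
      by (intro sets_PiM_I) auto
  qed
  have "emeasure (mu_p p) {\<omega>. P (win \<omega> a n)} = (\<Sum>bs\<in>S. emeasure (mu_p p) {\<omega>. win \<omega> a n = bs})"
    unfolding U using finS meas
    by (intro sum_emeasure[symmetric]) (auto simp: disjoint_family_on_def)
  also have "\<dots> = (\<Sum>bs\<in>S. ennreal (Wl p bs))"
    by (intro sum.cong refl emeasure_win_eq) (simp add: S_def)
  also have "\<dots> = ennreal (\<Sum>bs\<in>S. Wl p bs)"
    by (rule sum_ennreal) (simp add: Wl_nonneg[OF p0 p1])
  also have "(\<Sum>bs\<in>S. Wl p bs) = prL p n P"
    unfolding prL_def sumL_def S_def
    using finite_lists_length_eq[of "UNIV::bool set" n]
    by (subst sum.inter_filter[symmetric]) (auto intro!: sum.cong)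
  finally show ?thesis .
qed

lemma bridge2: "emeasure (mu_p p) {\<omega>. P (win \<omega> a n) \<and> Q (win \<omega> (a + int n) m)} = ennreal (prL p n P * prL p m Q)"
proof -
  have "{\<omega>. P (win \<omega> a n) \<and> Q (win \<omega> (a + int n) m)} =
        {\<omega>. (\<lambda>zs. P (take n zs) \<and> Q (drop n zs)) (win \<omega> a (n + m))}"
    by (simp add: win_add)
  then show ?thesis using bridge[of "\<lambda>zs. P (take n zs) \<and> Q (drop n zs)" a "n + m"]
    by (simp add: prL_prod)
qed

end

definition st :: "(int \<Rightarrow> bool) \<Rightarrow> int \<Rightarrow> enat" where
  "st x i = (if x i then (if x (i - 1) then 1 else 0)
             else if (\<exists>d::nat. x (i - int d)) then enat (Suc (LEAST d::nat. x (i - int d))) else \<infinity>)"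

lemma Least_ge1:
  assumes "\<not> x i" "\<exists>d::nat. x (i - int d)"
  shows "1 \<le> (LEAST d::nat. x (i - int d))"
proof (rule ccontr)
  assume "\<not> 1 \<le> (LEAST d::nat. x (i - int d))"
  then have "(LEAST d::nat. x (i - int d)) = 0" by simp
  moreover have "x (i - int (LEAST d::nat. x (i - int d)))" using assms(2) by (rule LeastI_ex)
  ultimately show False using assms(1) by simp
qed

lemma tau_st: "tau (st x i) = x i"
proof -
  have "enat (Suc L) \<noteq> 0 \<and> enat (Suc L) \<noteq> 1" if "1 \<le> L" for L
    using that by (simp add: zero_enat_def one_enat_def)
  then show ?thesis
    using Least_ge1[of x i] by (auto simp: st_def tau_def)
qed

lemma st_le1: "st x i \<le> 1 \<longleftrightarrow> x i"
proof -
  have "\<not> enat (Suc L) \<le> 1" if "1 \<le> L" for L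
    using that by (simp add: one_enat_def)
  then show ?thesis using Least_ge1[of x i] by (auto simp: st_def)
qed

lemma st_step: "st x (i + 1) = dl (st x i) (x (i + 1))"
proof (cases "x (i + 1)")
  case True
  have "st x (i + 1) = (if x i then 1 else 0)" using True by (simp add: st_def)
  then show ?thesis using st_le1[of x i] True by (simp add: dl_def)
next
  case False
  note xi1 = False
  show ?thesis
  proof (cases "x i")
    case True
    have ex: "\<exists>d::nat. x (i + 1 - int d)" using True by (intro exI[of _ 1]) simp
    have "(LEAST d::nat. x (i + 1 - int d)) = 1"
    proof (rule Least_equality)
      show "x (i + 1 - int 1)" using True by simp
    next
      fix y :: nat assume "x (i + 1 - int y)" then show "1 \<le> y" using xi1 by (cases y) auto
    qed
    then have "st x (i + 1) = 2" using xi1 ex by (simp add: st_def numeral_eq_enat)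
    then show ?thesis using True st_le1[of x i] by (simp add: dl_def xi1)
  next
    case False
    note xi = False
    show ?thesis
    proof (cases "\<exists>d::nat. x (i - int d)")
      case True
      then obtain d0 where d0: "x (i - int d0)" by blast
      have ex: "\<exists>d::nat. x (i + 1 - int d)" using d0 by (intro exI[of _ "Suc d0"]) simp
      have "(LEAST d::nat. x (i + 1 - int d)) = Suc (LEAST m::nat. x (i + 1 - int (Suc m)))"
        by (rule Least_Suc[of _ "Suc d0"]) (use d0 xi1 in simp_all)
      also have "(\<lambda>m::nat. x (i + 1 - int (Suc m))) = (\<lambda>m. x (i - int m))" by simp
      finally have L: "(LEAST d::nat. x (i + 1 - int d)) = Suc (LEAST m::nat. x (i - int m))" .
      have "st x (i + 1) = enat (Suc (Suc (LEAST m::nat. x (i - int m))))"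
        using xi1 ex L by (simp add: st_def)
      moreover have "st x i = enat (Suc (LEAST m::nat. x (i - int m)))"
        using xi True by (simp add: st_def)
      moreover have "1 \<le> (LEAST m::nat. x (i - int m))" using Least_ge1[OF xi True] .
      ultimately show ?thesis using xi1
        by (simp add: dl_def one_enat_def)
    next
      case False
      have nex: "\<not> (\<exists>d::nat. x (i + 1 - int d))"
      proof
        assume "\<exists>d::nat. x (i + 1 - int d)"
        then obtain d where d: "x (i + 1 - int d)" by blast
        show False
        proof (cases d)
          case 0 then show False using d xi1 by simp
        next
          case (Suc m) then show False using d False by (auto simp: algebra_simps)
        qed
      qed
      then show ?thesis using xi xi1 False by (simp add: st_def dl_def)
    qed
  qed
qed

lemma st_1: "st x i = 1 \<longleftrightarrow> x i \<and> x (i - 1)"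
proof -
  have "enat (Suc L) \<noteq> 1" if "1 \<le> L" for L using that by (simp add: one_enat_def)
  then show ?thesis using Least_ge1[of x i] by (auto simp: st_def)
qed

lemma st_0: "st x i = 0 \<longleftrightarrow> x i \<and> \<not> x (i - 1)"
  by (cases "x i") (auto simp: st_def zero_enat_def one_enat_def)

lemma st_inf: "st x i = \<infinity> \<longleftrightarrow> (\<forall>d::nat. \<not> x (i - int d))"
proof (cases "x i")
  case True
  then have "\<exists>d::nat. x (i - int d)" by (intro exI[of _ 0]) simp
  then show ?thesis using True by (simp add: st_def)
qed (simp add: st_def)

lemma st_n:
  assumes n: "2 \<le> n"
  shows "st x i = enat n \<longleftrightarrow> x (i - int (n - 1)) \<and> (\<forall>d<n - 1. \<not> x (i - int d))"
proof
  assume H: "st x i = enat n"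
  have xi: "\<not> x i"
  proof
    assume "x i" then have "st x i \<le> 1" using st_le1 by blast
    then show False using H n by (simp add: one_enat_def)
  qed
  have ex: "\<exists>d::nat. x (i - int d)"
    using H xi by (auto simp: st_def split: if_splits)
  then have "Suc (LEAST d::nat. x (i - int d)) = n" using H xi by (simp add: st_def)
  then have L: "(LEAST d::nat. x (i - int d)) = n - 1" by simp
  show "x (i - int (n - 1)) \<and> (\<forall>d<n - 1. \<not> x (i - int d))"
    using LeastI_ex[OF ex] not_less_Least[of _ "\<lambda>d::nat. x (i - int d)"] unfolding L by blast
next
  assume H: "x (i - int (n - 1)) \<and> (\<forall>d<n - 1. \<not> x (i - int d))"
  have xi: "\<not> x i" using H[THEN conjunct2, rule_format, of 0] n by simp
  have L: "(LEAST d::nat. x (i - int d)) = n - 1"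
    by (rule Least_equality) (use H in \<open>auto simp: not_less[symmetric]\<close>)
  have ex: "\<exists>d::nat. x (i - int d)" using H by blast
  show "st x i = enat n" using xi ex L n by (auto simp: st_def)
qed

lemma st_meas: "(\<lambda>x. st x i) \<in> measurable Omega_M (count_space UNIV)"
  unfolding st_def Omega_M_def by measurable

primrec pathc :: "enat \<Rightarrow> enat list \<Rightarrow> bool" where
  "pathc s [] = True"
| "pathc s (t # ts) = (t = dl s (tau t) \<and> pathc t ts)"

lemma st_next_iff: "st x k = s \<Longrightarrow> (st x (k + 1) = t \<longleftrightarrow> t = dl s (tau t) \<and> x (k + 1) = tau t)"
  using st_step[of x k] tau_st[of x "k + 1"] by auto

lemma cyl_iff:
  "(\<forall>j<length (s # ys). st x (k + int j) = (s # ys) ! j) \<longleftrightarrow>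
   (pathc s ys \<and> st x k = s \<and> (\<forall>j<length ys. x (k + 1 + int j) = tau (ys ! j)))"
proof (induction ys arbitrary: s k)
  case Nil then show ?case by simp
next
  case (Cons t ts)
  have "(\<forall>j<length (s # t # ts). st x (k + int j) = (s # t # ts) ! j) \<longleftrightarrow>
        st x k = s \<and> (\<forall>j<length (t # ts). st x ((k + 1) + int j) = (t # ts) ! j)"
    by (simp only: length_Cons All_less_Suc2) (simp add: ac_simps)
  also have "\<dots> \<longleftrightarrow> st x k = s \<and> (pathc t ts \<and> st x (k + 1) = t \<and> (\<forall>j<length ts. x (k + 1 + 1 + int j) = tau (ts ! j)))"
    using Cons.IH by simp
  also have "\<dots> \<longleftrightarrow> pathc s (t # ts) \<and> st x k = s \<and> (\<forall>j<length (t # ts). x (k + 1 + int j) = tau ((t # ts) ! j))"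
    using st_next_iff[of x k s t] by (auto simp: All_less_Suc2 ac_simps)
  finally show ?case .
qed

lemma Pi_nz: "Pi_p p s t \<noteq> 0 \<Longrightarrow> t = dl s (tau t)"
proof -
  assume nz: "Pi_p p s t \<noteq> 0"
  consider "s = 0" | "s = 1" | "s \<noteq> 0 \<and> s \<noteq> 1" by blast
  then show ?thesis
  proof cases
    case 1 then show ?thesis using nz by (auto simp: Pi_p_def dl_def tau_def split: if_splits)
  next
    case 2 then show ?thesis using nz
      by (auto simp: Pi_p_def dl_def tau_def one_enat_def zero_enat_def numeral_eq_enat split: if_splits)
  next
    case 3
    then have s1: "\<not> s \<le> 1" by (cases s) (auto simp: one_enat_def zero_enat_def)
    have s2: "s + 1 \<noteq> 0 \<and> s + 1 \<noteq> 1" using 3 by (cases s) (auto simp: one_enat_def zero_enat_def)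
    show ?thesis using nz 3 s1 s2 by (auto simp: Pi_p_def dl_def tau_def split: if_splits)
  qed
qed

lemma prod_Pi:
  "(\<Prod>j<length (s # ys) - 1. Pi_p p ((s # ys) ! j) ((s # ys) ! Suc j)) =
   (if pathc s ys then Fw p s (map tau ys) else 0)"
proof (induction ys arbitrary: s)
  case Nil then show ?case by simp
next
  case (Cons t ts)
  have "(\<Prod>j<length (s # t # ts) - 1. Pi_p p ((s # t # ts) ! j) ((s # t # ts) ! Suc j)) =
        Pi_p p s t * (\<Prod>j<length (t # ts) - 1. Pi_p p ((t # ts) ! j) ((t # ts) ! Suc j))"
    by (simp del: prod.lessThan_Suc add: prod.lessThan_Suc_shift)
  also have "\<dots> = Pi_p p s t * (if pathc t ts then Fw p t (map tau ts) else 0)"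
    using Cons.IH by simp
  also have "\<dots> = (if pathc s (t # ts) then Fw p s (map tau (t # ts)) else 0)"
    using Pi_nz[of p s t] by auto
  finally show ?case .
qed

lemma T_pair: "T_map \<omega> (k - 1) \<and> T_map \<omega> k \<longleftrightarrow> \<omega> (k - 1) \<and> \<omega> k"
  by (auto simp: T_map_def)

lemma T_start: "T_map \<omega> k \<and> \<not> T_map \<omega> (k - 1) \<longleftrightarrow> \<not> \<omega> (k - 1) \<and> \<omega> k \<and> \<omega> (k + 1)"
  by (auto simp: T_map_def)

lemma T_win: "1 \<le> q \<Longrightarrow> Suc q < n \<Longrightarrow> tT (win \<omega> a n) q = T_map \<omega> (a + int q)"
  by (simp add: tT_def tf_def T_map_def of_nat_diff algebra_simps)

lemma hwP_win: "hwP w (win \<omega> a (length w + 2)) \<longleftrightarrow> \<omega> a \<and> (\<forall>j<length w. T_map \<omega> (a + 1 + int j) = w ! j)"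
  unfolding hwP_def by (simp add: T_win ac_simps)

lemma rev_idx: "(\<forall>d<m. P (k - int d)) \<longleftrightarrow> (\<forall>j<m. P (k - int m + 1 + int j))"
proof
  assume H: "\<forall>d<m. P (k - int d)"
  show "\<forall>j<m. P (k - int m + 1 + int j)"
  proof (intro allI impI)
    fix j assume j: "j < m"
    have e: "k - int m + 1 + int j = k - int (m - 1 - j)" using j by (simp add: of_nat_diff)
    have "m - 1 - j < m" using j by simp
    then show "P (k - int m + 1 + int j)" using H e by metis
  qed
next
  assume H: "\<forall>j<m. P (k - int m + 1 + int j)"
  show "\<forall>d<m. P (k - int d)"
  proof (intro allI impI)
    fix d assume d: "d < m"
    have e: "k - int d = k - int m + 1 + int (m - 1 - d)" using d by (simp add: of_nat_diff)
    have "m - 1 - d < m" using d by simp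
    then show "P (k - int d)" using H e by metis
  qed
qed

definition piv :: "real \<Rightarrow> enat \<Rightarrow> real" where
  "piv p s = (if s = 0 then (1 - p) * p * p else if s = 1 then p * p else if s = \<infinity> then 0
              else p * p * Fw p 1 (replicate (the_enat s - 1) False))"

definition Ev :: "int \<Rightarrow> enat \<Rightarrow> bool list \<Rightarrow> (int \<Rightarrow> bool) set" where
  "Ev k s w = {\<omega>. st (T_map \<omega>) k = s \<and> (\<forall>j<length w. T_map \<omega> (k + 1 + int j) = w ! j)}"

lemma prL_2b: "prL p 2 (\<lambda>xs. \<not> xs ! 0 \<and> xs ! 1) = (1 - p) * p"
  by (simp add: prL_Suc prL_0 wb_def numeral_2_eq_2)

lemma prL_2c: "prL p 2 (\<lambda>xs. \<not> (xs ! 0 \<and> xs ! 1)) = 1 - p * p"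
  by (simp add: prL_Suc prL_0 wb_def numeral_2_eq_2 algebra_simps)

definition Psi :: "nat \<Rightarrow> bool list \<Rightarrow> bool" where
  "Psi r zs = (\<forall>i<r. \<not> (zs ! (2 * i) \<and> zs ! (2 * i + 1)))"

lemma prL_Psi: "prL p (2 * r) (Psi r) = (1 - p * p) ^ r"
proof (induction r)
  case 0 then show ?case by (simp add: Psi_def prL_0)
next
  case (Suc r)
  have "prL p (2 * Suc r) (Psi (Suc r)) = prL p (2 + 2 * r) (Psi (Suc r))" by simp
  also have "\<dots> = prL p 2 (\<lambda>xs. \<not> (xs ! 0 \<and> xs ! 1)) * prL p (2 * r) (Psi r)"
  proof (rule prL_prod')
    fix xs ys :: "bool list" assume l: "length xs = 2" "length ys = 2 * r"
    show "Psi (Suc r) (xs @ ys) = (\<not> (xs ! 0 \<and> xs ! 1) \<and> Psi r ys)"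
      unfolding Psi_def using l by (simp add: All_less_Suc2 nth_append)
  qed
  finally show ?case using Suc prL_2c[of p] by simp
qed

context
  fixes p :: real
  assumes p0: "0 < p" and p1: "p < 1"
begin

lemma win_sets: "{\<omega>. P (win \<omega> a n)} \<in> sets (mu_p p)"
proof -
  define S where "S = {bs::bool list. length bs = n \<and> P bs}"
  have finS: "finite S" unfolding S_def
    using finite_lists_length_eq[of "UNIV::bool set" n] by (rule rev_finite_subset) auto
  have U: "{\<omega>. P (win \<omega> a n)} = (\<Union>bs\<in>S. {\<omega>. win \<omega> a n = bs})"
    by (auto simp: S_def)
  have meas: "{\<omega>. win \<omega> a n = bs} \<in> sets (mu_p p)" if "bs \<in> S" for bs
  proof -
    have l: "length bs = n" using that by (simp add: S_def)
    show ?thesis unfolding win_eq_emb[OF p0 p1 l, of a] mu_p_def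
      by (intro sets_PiM_I) auto
  qed
  show ?thesis unfolding U using finS meas by blast
qed

lemma inf_null: "emeasure (mu_p p) {\<omega>. st (T_map \<omega>) k = \<infinity>} = 0"
proof -
  define c where "c = 1 - p * p"
  have c0: "0 \<le> c" "c < 1" using p0 p1 by (simp_all add: c_def mult_le_one)
  have bound: "emeasure (mu_p p) {\<omega>. st (T_map \<omega>) k = \<infinity>} \<le> ennreal (c ^ r)" for r
  proof -
    have sub: "{\<omega>. st (T_map \<omega>) k = \<infinity>} \<subseteq> {\<omega>. Psi r (win \<omega> (k - 2 * int r) (2 * r))}"
    proof
      fix \<omega> assume "\<omega> \<in> {\<omega>. st (T_map \<omega>) k = \<infinity>}"
      then have H: "\<forall>d::nat. \<not> T_map \<omega> (k - int d)" by (simp add: st_inf)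
      show "\<omega> \<in> {\<omega>. Psi r (win \<omega> (k - 2 * int r) (2 * r))}"
        unfolding Psi_def
      proof (intro CollectI allI impI notI)
        fix i assume i: "i < r" and both: "win \<omega> (k - 2 * int r) (2 * r) ! (2 * i) \<and> win \<omega> (k - 2 * int r) (2 * r) ! (2 * i + 1)"
        then have "\<omega> (k - 2 * int r + int (2 * i)) \<and> \<omega> (k - 2 * int r + int (2 * i + 1))" by simp
        then have "T_map \<omega> (k - 2 * int r + int (2 * i))" by (simp add: T_map_def algebra_simps)
        moreover have "k - 2 * int r + int (2 * i) = k - int (2 * r - 2 * i)" using i by (simp add: of_nat_diff)
        ultimately show False using H by metis
      qed
    qed
    have "emeasure (mu_p p) {\<omega>. st (T_map \<omega>) k = \<infinity>} \<le> emeasure (mu_p p) {\<omega>. Psi r (win \<omega> (k - 2 * int r) (2 * r))}"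
      by (rule emeasure_mono[OF sub win_sets])
    also have "\<dots> = ennreal (c ^ r)" using bridge[OF p0 p1] prL_Psi by (simp add: c_def)
    finally show ?thesis .
  qed
  have lim: "(\<lambda>r. ennreal (c ^ r)) \<longlonglongrightarrow> ennreal 0"
    by (rule tendsto_ennrealI) (rule LIMSEQ_power_zero, use c0 in simp)
  have "emeasure (mu_p p) {\<omega>. st (T_map \<omega>) k = \<infinity>} \<le> ennreal 0"
    by (rule LIMSEQ_le_const[OF lim]) (use bound in blast)
  then show ?thesis by simp
qed

end

context
  fixes p :: real
  assumes p0: "0 < p" and p1: "p < 1"
begin

lemma piv_0: "piv p 0 = (1 - p) * p * p" by (simp add: piv_def)
lemma piv_1: "piv p 1 = p * p" by (simp add: piv_def)
lemma piv_inf: "piv p \<infinity> = 0" by (simp add: piv_def)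
lemma piv_n: "2 \<le> n \<Longrightarrow> piv p (enat n) = p * p * Fw p 1 (replicate (n - 1) False)"
  by (simp add: piv_def zero_enat_def one_enat_def)

lemma main_1: "emeasure (mu_p p) (Ev k 1 w) = ennreal (piv p 1 * Fw p 1 w)"
proof -
  have "Ev k 1 w = {\<omega>. (\<lambda>xs. xs ! 0) (win \<omega> (k - 1) 1) \<and> hwP w (win \<omega> (k - 1 + int 1) (length w + 2))}"
  proof (intro set_eqI)
    fix \<omega>
    have a: "st (T_map \<omega>) k = 1 \<longleftrightarrow> \<omega> (k - 1) \<and> \<omega> k"
      using st_1[of "T_map \<omega>" k] T_pair[of \<omega> k] by auto
    show "\<omega> \<in> Ev k 1 w \<longleftrightarrow> \<omega> \<in> {\<omega>. (\<lambda>xs. xs ! 0) (win \<omega> (k - 1) 1) \<and> hwP w (win \<omega> (k - 1 + int 1) (length w + 2))}"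
      unfolding Ev_def using a hwP_win[of w \<omega> k] by auto
  qed
  then have "emeasure (mu_p p) (Ev k 1 w) = ennreal (prL p 1 (\<lambda>xs. xs ! 0) * prL p (length w + 2) (hwP w))"
    by (simp only:) (rule bridge2[OF p0 p1, of "\<lambda>xs. xs ! 0" "k - 1" 1 "hwP w" "length w + 2"])
  also have "\<dots> = ennreal (piv p 1 * Fw p 1 w)"
    using hw_main[OF p0 p1, of w] by (simp add: prL_1 prL_1' hw_def piv_1 mult.assoc)
  finally show ?thesis .
qed

lemma main_0: "emeasure (mu_p p) (Ev k 0 w) = ennreal (piv p 0 * Fw p 0 w)"
proof (cases w)
  case Nil
  have "Ev k 0 w = {\<omega>. (\<lambda>xs. \<not> xs ! 0) (win \<omega> (k - 1) 1) \<and> (\<lambda>xs. xs ! 0 \<and> xs ! 1) (win \<omega> (k - 1 + int 1) 2)}"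
  proof (intro set_eqI)
    fix \<omega>
    have a: "st (T_map \<omega>) k = 0 \<longleftrightarrow> \<not> \<omega> (k - 1) \<and> \<omega> k \<and> \<omega> (k + 1)"
      using st_0[of "T_map \<omega>" k] T_start[of \<omega> k] by auto
    show "\<omega> \<in> Ev k 0 w \<longleftrightarrow> \<omega> \<in> {\<omega>. (\<lambda>xs. \<not> xs ! 0) (win \<omega> (k - 1) 1) \<and> (\<lambda>xs. xs ! 0 \<and> xs ! 1) (win \<omega> (k - 1 + int 1) 2)}"
      unfolding Ev_def using a Nil by (simp add: numeral_2_eq_2 add.commute)
  qed
  then have "emeasure (mu_p p) (Ev k 0 w) = ennreal (prL p 1 (\<lambda>xs. \<not> xs ! 0) * prL p 2 (\<lambda>xs. xs ! 0 \<and> xs ! 1))"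
    by (simp only:) (rule bridge2[OF p0 p1, of "\<lambda>xs. \<not> xs ! 0" "k - 1" 1 "\<lambda>xs. xs ! 0 \<and> xs ! 1" 2])
  then show ?thesis using Nil prL_2[of p] by (simp add: prL_1n prL_1n' piv_0 mult.assoc)
next
  case (Cons b w')
  show ?thesis
  proof (cases b)
    case False
    have "Ev k 0 w = {}"
    proof -
      have "False" if "\<omega> \<in> Ev k 0 w" for \<omega>
      proof -
        have "st (T_map \<omega>) k = 0" "\<not> T_map \<omega> (k + 1)"
          using that Cons False unfolding Ev_def by (auto dest: spec[of _ 0])
        then show False using st_0[of "T_map \<omega>" k] T_start[of \<omega> k] by (auto simp: T_map_def)
      qed
      then show ?thesis by blast
    qed
    moreover have "Fw p 0 w = 0" using Cons False by (simp add: dl_0_False Pi_0_2)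
    ultimately show ?thesis by simp
  next
    case True
    have "Ev k 0 w = {\<omega>. (\<lambda>xs. \<not> xs ! 0 \<and> xs ! 1) (win \<omega> (k - 1) 2) \<and> hwP w' (win \<omega> (k - 1 + int 2) (length w' + 2))}"
    proof (intro set_eqI)
      fix \<omega>
      have a: "st (T_map \<omega>) k = 0 \<longleftrightarrow> \<not> \<omega> (k - 1) \<and> \<omega> k \<and> \<omega> (k + 1)"
        using st_0[of "T_map \<omega>" k] T_start[of \<omega> k] by auto
      have b: "(\<forall>j<length w. T_map \<omega> (k + 1 + int j) = w ! j) \<longleftrightarrow>
               T_map \<omega> (k + 1) \<and> (\<forall>j<length w'. T_map \<omega> (k + 1 + 1 + int j) = w' ! j)"
        using Cons True by (simp add: All_less_Suc2 ac_simps)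
      have c: "\<omega> k \<Longrightarrow> T_map \<omega> (k + 1) = \<omega> (k + 1)" by (simp add: T_map_def)
      have d: "k - 1 + int 2 = k + 1" by simp
      show "\<omega> \<in> Ev k 0 w \<longleftrightarrow> \<omega> \<in> {\<omega>. (\<lambda>xs. \<not> xs ! 0 \<and> xs ! 1) (win \<omega> (k - 1) 2) \<and> hwP w' (win \<omega> (k - 1 + int 2) (length w' + 2))}"
        unfolding Ev_def d using a b c hwP_win[of w' \<omega> "k + 1"] by auto
    qed
    then have "emeasure (mu_p p) (Ev k 0 w) = ennreal (prL p 2 (\<lambda>xs. \<not> xs ! 0 \<and> xs ! 1) * prL p (length w' + 2) (hwP w'))"
      by (simp only:) (rule bridge2[OF p0 p1, of "\<lambda>xs. \<not> xs ! 0 \<and> xs ! 1" "k - 1" 2 "hwP w'" "length w' + 2"])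
    also have "\<dots> = ennreal (piv p 0 * Fw p 0 w)"
      using hw_main[OF p0 p1, of w'] Cons True prL_2b[of p]
      by (simp add: hw_def piv_0 dl_0_True Pi_0_1 mult.assoc)
    finally show ?thesis .
  qed
qed

lemma main_n:
  assumes n: "2 \<le> n"
  shows "emeasure (mu_p p) (Ev k (enat n) w) = ennreal (piv p (enat n) * Fw p (enat n) w)"
proof -
  define m where "m = n - 1"
  have m1: "1 \<le> m" using n by (simp add: m_def)
  define b where "b = k - int m"
  define w' where "w' = replicate m False @ w"
  have lw': "length w' = m + length w" by (simp add: w'_def)
  have "Ev k (enat n) w = {\<omega>. (\<lambda>xs. xs ! 0) (win \<omega> (b - 1) 1) \<and> hwP w' (win \<omega> (b - 1 + int 1) (length w' + 2))}"
  proof (intro set_eqI)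
    fix \<omega>
    let ?T = "T_map \<omega>"
    have a: "st ?T k = enat n \<longleftrightarrow> ?T b \<and> (\<forall>j<m. \<not> ?T (b + 1 + int j))"
      using st_n[OF n, of ?T k] rev_idx[of m "\<lambda>i. \<not> ?T i" k] by (simp add: m_def b_def ac_simps)
    have c: "(\<forall>j<length w'. ?T (b + 1 + int j) = w' ! j) \<longleftrightarrow>
             (\<forall>j<m. \<not> ?T (b + 1 + int j)) \<and> (\<forall>i<length w. ?T (k + 1 + int i) = w ! i)"
    proof -
      have "(\<forall>j<length w'. ?T (b + 1 + int j) = w' ! j) \<longleftrightarrow>
            (\<forall>j<m. ?T (b + 1 + int j) = w' ! j) \<and> (\<forall>i<length w. ?T (b + 1 + int (m + i)) = w' ! (m + i))"
        unfolding lw' by (rule all_less_add_split)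
      moreover have bi: "b + 1 + (int m + int i) = k + 1 + int i" for i by (simp add: b_def)
      ultimately show ?thesis by (simp add: w'_def nth_append bi)
    qed
    have e: "?T b \<and> \<not> ?T (b + 1) \<longleftrightarrow> \<omega> (b - 1) \<and> \<omega> b \<and> \<not> \<omega> (b + 1)"
      by (auto simp: T_map_def)
    have f: "(\<forall>j<m. \<not> ?T (b + 1 + int j)) \<Longrightarrow> \<not> ?T (b + 1)"
      using m1 by (metis add.right_neutral of_nat_0 less_le_trans zero_less_one)
    have g: "\<omega> b \<Longrightarrow> \<not> ?T (b + 1) \<Longrightarrow> \<not> \<omega> (b + 1)" by (auto simp: T_map_def)
    have h: "\<omega> (b - 1) \<Longrightarrow> \<omega> b \<Longrightarrow> ?T b" by (simp add: T_map_def)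
    have d: "b - 1 + int 1 = b" by simp
    show "\<omega> \<in> Ev k (enat n) w \<longleftrightarrow> \<omega> \<in> {\<omega>. (\<lambda>xs. xs ! 0) (win \<omega> (b - 1) 1) \<and> hwP w' (win \<omega> (b - 1 + int 1) (length w' + 2))}"
      unfolding Ev_def d mem_Collect_eq hwP_win a c using e f g h by auto
  qed
  then have "emeasure (mu_p p) (Ev k (enat n) w) = ennreal (prL p 1 (\<lambda>xs. xs ! 0) * prL p (length w' + 2) (hwP w'))"
    by (simp only:) (rule bridge2[OF p0 p1, of "\<lambda>xs. xs ! 0" "b - 1" 1 "hwP w'" "length w' + 2"])
  also have "\<dots> = ennreal (p * (p * Fw p 1 w'))"
    using hw_main[OF p0 p1, of w'] by (simp add: prL_1 prL_1' hw_def)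
  also have "Fw p 1 w' = Fw p 1 (replicate m False) * Fw p (enat n) w"
    unfolding w'_def Fw_append dls_zeros using n by (simp add: m_def)
  finally show ?thesis using n by (simp add: piv_n m_def mult.assoc)
qed

lemma main_inf: "emeasure (mu_p p) (Ev k \<infinity> w) = ennreal (piv p \<infinity> * Fw p \<infinity> w)"
proof -
  have "Ev k \<infinity> w \<subseteq> {\<omega>. st (T_map \<omega>) k = \<infinity>}" by (auto simp: Ev_def)
  moreover have "{\<omega>. st (T_map \<omega>) k = \<infinity>} \<in> sets (mu_p p)"
  proof -
    have "(\<lambda>\<omega>. st (T_map \<omega>) k) \<in> measurable (mu_p p) (count_space UNIV)"
      by (rule meas_mu_cong, rule measurable_compose[OF T_map_meas st_meas])
    from measurable_sets[OF this, of "{\<infinity>}"] show ?thesis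
      by (simp add: space_mu vimage_def)
  qed
  ultimately have "emeasure (mu_p p) (Ev k \<infinity> w) \<le> emeasure (mu_p p) {\<omega>. st (T_map \<omega>) k = \<infinity>}"
    by (rule emeasure_mono)
  then show ?thesis using inf_null[OF p0 p1, of k] by (simp add: piv_inf)
qed

lemma main_event: "emeasure (mu_p p) (Ev k s w) = ennreal (piv p s * Fw p s w)"
proof (cases s)
  case (enat n)
  consider "n = 0" | "n = 1" | "2 \<le> n" by linarith
  then show ?thesis
  proof cases
    case 1 then show ?thesis using main_0 enat by (simp add: zero_enat_def)
  next
    case 2 then show ?thesis using main_1 enat by (simp add: one_enat_def)
  next
    case 3 then show ?thesis using main_n enat by simp
  qed
next
  case infinity then show ?thesis using main_inf by simp
qed

end

definition cylS :: "int \<Rightarrow> enat list \<Rightarrow> (int \<Rightarrow> enat) set" where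
  "cylS k xs = {n \<in> space S_path_M. \<forall>j<length xs. n (k + int j) = xs ! j}"

lemma cylS_sets: "cylS k xs \<in> sets S_path_M"
  unfolding cylS_def S_path_M_def by measurable

definition P0 :: "real \<Rightarrow> (int \<Rightarrow> enat) measure" where
  "P0 p = distr (mu_p p) S_path_M (\<lambda>\<omega> i. st (T_map \<omega>) i)"

lemma stmap_meas: "(\<lambda>\<omega> i. st (T_map \<omega>) i) \<in> measurable (mu_p p) S_path_M"
  unfolding S_path_M_def
proof (rule measurable_PiM_single')
  fix i :: int
  show "(\<lambda>\<omega>. st (T_map \<omega>) i) \<in> measurable (mu_p p) (count_space UNIV)"
    by (rule meas_mu_cong, rule measurable_compose[OF T_map_meas st_meas])
qed simp

lemma sets_P0: "sets (P0 p) = sets S_path_M"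
  by (simp add: P0_def)

lemma space_P0: "space (P0 p) = UNIV"
  by (simp add: P0_def space_S)

lemma prob_P0: "prob_space (P0 p)"
  unfolding P0_def by (rule prob_space.prob_space_distr[OF prob_mu stmap_meas])

lemma tau_law_P0: "distr (P0 p) Omega_M (\<lambda>n i. tau (n i)) = TBF p"
proof -
  have tm: "(\<lambda>n i. tau (n i)) \<in> measurable S_path_M Omega_M"
    unfolding S_path_M_def Omega_M_def
    by (rule measurable_PiM_single') (simp_all add: measurable_component_singleton)
  have "distr (P0 p) Omega_M (\<lambda>n i. tau (n i)) = distr (mu_p p) Omega_M ((\<lambda>n i. tau (n i)) \<circ> (\<lambda>\<omega> i. st (T_map \<omega>) i))"
    unfolding P0_def by (rule distr_distr[OF tm stmap_meas])
  also have "\<dots> = distr (mu_p p) Omega_M T_map"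
    by (rule distr_cong) (simp_all add: tau_st o_def)
  finally show ?thesis by (simp add: TBF_def)
qed

lemma preimage_cyl:
  "(\<lambda>\<omega> i. st (T_map \<omega>) i) -` cylS k (s # ys) \<inter> space (mu_p p) =
   (if pathc s ys then Ev k s (map tau ys) else {})"
proof (intro set_eqI)
  fix \<omega>
  show "\<omega> \<in> (\<lambda>\<omega> i. st (T_map \<omega>) i) -` cylS k (s # ys) \<inter> space (mu_p p) \<longleftrightarrow>
        \<omega> \<in> (if pathc s ys then Ev k s (map tau ys) else {})"
    using cyl_iff[of s ys "T_map \<omega>" k] by (simp add: cylS_def space_S space_mu Ev_def)
qed

context
  fixes p :: real
  assumes p0: "0 < p" and p1: "p < 1"
begin

lemma P0_cyl:
  "emeasure (P0 p) (cylS k (s # ys)) =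
   ennreal (piv p s * (\<Prod>j<length (s # ys) - 1. Pi_p p ((s # ys) ! j) ((s # ys) ! Suc j)))"
proof -
  have "emeasure (P0 p) (cylS k (s # ys)) = emeasure (mu_p p) ((\<lambda>\<omega> i. st (T_map \<omega>) i) -` cylS k (s # ys) \<inter> space (mu_p p))"
    unfolding P0_def by (rule emeasure_distr[OF stmap_meas cylS_sets])
  also have "\<dots> = ennreal (piv p s * (if pathc s ys then Fw p s (map tau ys) else 0))"
    unfolding preimage_cyl using main_event[OF p0 p1] by simp
  finally show ?thesis using prod_Pi[of p s ys] by simp
qed

lemma piv_nonneg: "0 \<le> piv p s"
proof -
  have "0 \<le> p * p * Fw p 1 w" for w
    using hw_main[OF p0 p1, of w] prL_nonneg[OF p0 p1] p0 unfolding hw_def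
    by (metis mult.assoc mult_nonneg_nonneg less_eq_real_def)
  then show ?thesis using p0 p1 by (simp add: piv_def)
qed

lemma Ev_sets: "Ev k s w \<in> sets (mu_p p)"
proof -
  have "Ev k s w = (\<lambda>\<omega> i. st (T_map \<omega>) i) -` cylS k [s] \<inter> space (mu_p p) \<inter> {\<omega>. \<forall>j<length w. T_map \<omega> (k + 1 + int j) = w ! j}"
    by (auto simp: Ev_def cylS_def space_S space_mu)
  also have "\<dots> \<in> sets (mu_p p)"
  proof (rule sets.Int)
    show "(\<lambda>\<omega> i. st (T_map \<omega>) i) -` cylS k [s] \<inter> space (mu_p p) \<in> sets (mu_p p)"
      by (rule measurable_sets[OF stmap_meas cylS_sets])
    have "{\<omega>. \<forall>j<length w. T_map \<omega> (k + 1 + int j) = w ! j} = T_map -` {x \<in> space Omega_M. \<forall>j<length w. x (k + 1 + int j) = w ! j} \<inter> space Omega_M"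
      by (auto simp: space_Omega)
    also have "\<dots> \<in> sets Omega_M"
      by (rule measurable_sets[OF T_map_meas]) (unfold Omega_M_def, measurable)
    finally show "{\<omega>. \<forall>j<length w. T_map \<omega> (k + 1 + int j) = w ! j} \<in> sets (mu_p p)"
      using sets_mu by blast
  qed
  finally show ?thesis .
qed

lemma piv_sum: "(\<integral>\<^sup>+ s. ennreal (piv p s) \<partial>count_space UNIV) = 1"
proof -
  have "(\<integral>\<^sup>+ s. ennreal (piv p s) \<partial>count_space UNIV) = (\<integral>\<^sup>+ s. emeasure (mu_p p) (Ev 0 s []) \<partial>count_space UNIV)"
    using main_event[OF p0 p1, of 0 _ "[]"] by simp
  also have "\<dots> = emeasure (mu_p p) (\<Union>s. Ev 0 s [])"
  proof (rule emeasure_UN_countable[symmetric])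
    show "\<And>s. s \<in> UNIV \<Longrightarrow> Ev 0 s [] \<in> sets (mu_p p)" by (rule Ev_sets)
    show "countable (UNIV :: enat set)" by simp
    show "disjoint_family_on (\<lambda>s. Ev 0 s []) UNIV" by (auto simp: disjoint_family_on_def Ev_def)
  qed
  also have "(\<Union>s. Ev 0 s []) = space (mu_p p)" by (auto simp: Ev_def space_mu)
  also have "emeasure (mu_p p) (space (mu_p p)) = 1"
    using prob_mu by (rule prob_space.emeasure_space_1)
  finally show ?thesis .
qed

definition pi0 :: "enat pmf" where
  "pi0 = embed_pmf (piv p)"

lemma pmf_pi0: "pmf pi0 s = piv p s"
  unfolding pi0_def by (rule pmf_embed_pmf) (use piv_nonneg piv_sum in auto)

end

lemma nn_to_infsum:
  fixes f :: "'a \<Rightarrow> real"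
  assumes nn: "\<And>x. 0 \<le> f x" and I: "(\<integral>\<^sup>+x. ennreal (f x) \<partial>count_space UNIV) = ennreal c" and c: "0 \<le> c"
  shows "infsum f UNIV = c"
proof -
  have int: "integrable (count_space UNIV) f"
    by (rule integrableI_nonneg) (use nn I in auto)
  have "infsetsum f UNIV = enn2real (\<integral>\<^sup>+x. ennreal (f x) \<partial>count_space UNIV)"
    by (rule infsetsum_conv_nn_integral) (use nn I in auto)
  also have "\<dots> = c" using I c by simp
  finally have "infsetsum f UNIV = c" .
  moreover have "infsetsum f UNIV = infsum f UNIV"
    by (rule infsetsum_infsum) (simp add: abs_summable_on_def int)
  ultimately show ?thesis by simp
qed

lemma infsum_single_supp:
  fixes f :: "'a \<Rightarrow> real"
  assumes "\<And>s. s \<noteq> a \<Longrightarrow> f s = 0"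
  shows "infsum f UNIV = f a"
proof -
  have "infsum f UNIV = infsum f {a}"
    by (rule infsum_cong_neutral) (use assms in auto)
  then show ?thesis by simp
qed

lemma infsum_two_supp:
  fixes f :: "'a \<Rightarrow> real"
  assumes "\<And>s. s \<noteq> a \<Longrightarrow> s \<noteq> b \<Longrightarrow> f s = 0" and "a \<noteq> b"
  shows "infsum f UNIV = f a + f b"
proof -
  have "infsum f UNIV = infsum f {a, b}"
    by (rule infsum_cong_neutral) (use assms in auto)
  then show ?thesis using assms(2) by simp
qed

lemma Bq_mono: "Bq p (Suc n) \<le> Bq p n" if p0: "0 < p" and p1: "p < 1"
proof -
  have "Bq p (Suc n) = prL p (Suc n + 1) (\<lambda>bs. bs ! 0 \<and> no11 bs)" by (simp add: Bq_def)
  also have "\<dots> \<le> prL p (Suc n + 1) (\<lambda>zs. (\<lambda>bs. bs ! 0 \<and> no11 bs) (take (Suc n) zs) \<and> (\<lambda>_. True) (drop (Suc n) zs))"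
  proof (rule prL_mono[OF p0 p1])
    fix bs :: "bool list" assume "length bs = Suc n + 1" "bs ! 0 \<and> no11 bs"
    then show "(\<lambda>bs. bs ! 0 \<and> no11 bs) (take (Suc n) bs) \<and> (\<lambda>_. True) (drop (Suc n) bs)"
      by (auto simp: no11_def)
  qed
  also have "\<dots> = prL p (Suc n) (\<lambda>bs. bs ! 0 \<and> no11 bs) * prL p 1 (\<lambda>_. True)" by (rule prL_prod)
  also have "\<dots> = Bq p n" by (simp add: Bq_def prL_True)
  finally show ?thesis .
qed

context
  fixes p :: real
  assumes p0: "0 < p" and p1: "p < 1"
begin

lemma g_range: "s \<noteq> 0 \<Longrightarrow> s \<noteq> 1 \<Longrightarrow> 0 \<le> g_p p s \<and> g_p p s \<le> 1"
proof (cases s)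
  case (enat n)
  assume "s \<noteq> 0" "s \<noteq> 1"
  then have n: "2 \<le> n" using enat by (auto simp: zero_enat_def one_enat_def)
  have b: "0 < Bq p n" "0 \<le> Bq p (Suc n)" "Bq p (Suc n) \<le> Bq p n"
    using Bq_pos[OF p0 p1, of n] Bq_pos[OF p0 p1, of "Suc n"] Bq_mono[OF p0 p1, of n] by auto
  show ?thesis using g_Bq[OF p0 p1 n] enat b by (simp add: divide_le_eq_1)
next
  case infinity
  have "0 < lam_PF p" "lam_PF p < 1" using LL_pos[OF p0 p1] LL_lt1[OF p0 p1] unfolding LL_def[OF p0 p1] .
  then show ?thesis using infinity by (simp add: g_p_def)
qed

lemma Pi_nonneg: "0 \<le> Pi_p p s t"
  using p0 p1 g_range[of s] by (auto simp: Pi_p_def)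

lemma cylS_1: "cylS 1 [t] = {n. n 1 = t}"
  by (auto simp: cylS_def space_S)

lemma cylS_2: "cylS 0 [s, t] = {n. n 0 = s \<and> n 1 = t}"
  by (auto simp: cylS_def space_S less_Suc_eq numeral_2_eq_2)

lemma stat_pi0: "stationary_dist p (pi0 p)"
  unfolding stationary_dist_def
proof
  fix t
  have "ennreal (piv p t) = emeasure (P0 p) (cylS 1 [t])"
    using P0_cyl[OF p0 p1, of 1 t "[]"] by simp
  also have "cylS 1 [t] = (\<Union>s. cylS 0 [s, t])" unfolding cylS_1 cylS_2 by auto
  also have "emeasure (P0 p) (\<Union>s. cylS 0 [s, t]) = (\<integral>\<^sup>+ s. emeasure (P0 p) (cylS 0 [s, t]) \<partial>count_space UNIV)"
  proof (rule emeasure_UN_countable)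
    show "\<And>s. s \<in> UNIV \<Longrightarrow> cylS 0 [s, t] \<in> sets (P0 p)" using cylS_sets sets_P0 by blast
    show "countable (UNIV :: enat set)" by simp
    show "disjoint_family_on (\<lambda>s. cylS 0 [s, t]) UNIV"
      unfolding cylS_2 by (auto simp: disjoint_family_on_def)
  qed
  also have "\<dots> = (\<integral>\<^sup>+ s. ennreal (piv p s * Pi_p p s t) \<partial>count_space UNIV)"
    using P0_cyl[OF p0 p1, of 0 _ "[t]"] by simp
  finally have "infsum (\<lambda>s. piv p s * Pi_p p s t) UNIV = piv p t"
    by (intro nn_to_infsum) (auto intro: mult_nonneg_nonneg piv_nonneg[OF p0 p1] Pi_nonneg simp: piv_nonneg[OF p0 p1])
  then show "pmf (pi0 p) t = (\<Sum>\<^sub>\<infinity>s. pmf (pi0 p) s * Pi_p p s t)"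
    by (simp add: pmf_pi0[OF p0 p1])
qed

lemma piv_step: "2 \<le> n \<Longrightarrow> piv p (enat (Suc n)) = g_p p (enat n) * piv p (enat n)"
proof -
  assume n: "2 \<le> n"
  obtain k where k: "n = Suc k" using n by (cases n) auto
  have c: "Fw p 1 (replicate n False) = Fw p 1 (replicate k False) * g_p p (enat n)"
    using Fw_zeros_Suc[of p k] Pi_n_Suc[of n p] n k by (simp del: replicate.simps)
  have a: "piv p (enat (Suc n)) = p * p * Fw p 1 (replicate n False)" using piv_n[OF p0 p1, of "Suc n"] n by simp
  have b: "piv p (enat n) = p * p * Fw p 1 (replicate k False)" using piv_n[OF p0 p1, of n] n k by (simp del: replicate.simps)
  show ?thesis unfolding a b c by (simp add: ac_simps)
qed

lemma stat_unique:
  assumes st: "stationary_dist p \<sigma>"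
  shows "\<sigma> = pi0 p"
proof -
  define f where "f s = pmf \<sigma> s" for s
  have eq: "f t = infsum (\<lambda>s. f s * Pi_p p s t) UNIV" for t
    using st unfolding stationary_dist_def f_def by blast
  have ne: "enat m \<noteq> enat m'" if "m \<noteq> m'" for m m' using that by simp
  have e1: "f 1 = f 0 + p * f 1"
  proof -
    have "infsum (\<lambda>s. f s * Pi_p p s 1) UNIV = f 0 * Pi_p p 0 1 + f 1 * Pi_p p 1 1"
    proof (rule infsum_two_supp)
      fix s :: enat assume "s \<noteq> 0" "s \<noteq> 1"
      then have "s + 1 \<noteq> 1" by (cases s) (auto simp: one_enat_def zero_enat_def)
      then show "f s * Pi_p p s 1 = 0" using \<open>s \<noteq> 0\<close> \<open>s \<noteq> 1\<close> by (simp add: Pi_p_def)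
    qed simp
    then show ?thesis using eq[of 1] by (simp add: Pi_0_1 Pi_1_1 mult.commute)
  qed
  have e2: "f 2 = (1 - p) * f 1"
  proof -
    have "infsum (\<lambda>s. f s * Pi_p p s 2) UNIV = f 1 * Pi_p p 1 2"
    proof (rule infsum_single_supp)
      fix s :: enat assume "s \<noteq> 1"
      show "f s * Pi_p p s 2 = 0"
      proof (cases "s = 0")
        case True then show ?thesis by (simp add: Pi_0_2)
      next
        case False
        then have "s + 1 \<noteq> 2" using \<open>s \<noteq> 1\<close> by (cases s) (auto simp: one_enat_def zero_enat_def numeral_eq_enat)
        then show ?thesis using False \<open>s \<noteq> 1\<close> by (simp add: Pi_p_def)
      qed
    qed
    then show ?thesis using eq[of 2] by (simp add: Pi_1_2 mult.commute)
  qed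
  have e3: "f (enat (Suc n)) = g_p p (enat n) * f (enat n)" if n: "2 \<le> n" for n
  proof -
    have "infsum (\<lambda>s. f s * Pi_p p s (enat (Suc n))) UNIV = f (enat n) * Pi_p p (enat n) (enat (Suc n))"
    proof (rule infsum_single_supp)
      fix s :: enat assume sn: "s \<noteq> enat n"
      show "f s * Pi_p p s (enat (Suc n)) = 0"
      proof -
        have a: "enat (Suc n) \<noteq> 1" "enat (Suc n) \<noteq> 2" "enat (Suc n) \<noteq> 0" using n
          by (simp_all add: one_enat_def zero_enat_def numeral_eq_enat)
        have b: "enat (Suc n) \<noteq> s + 1" using sn by (cases s) (auto simp: one_enat_def)
        show ?thesis using a b by (simp add: Pi_p_def)
      qed
    qed
    then show ?thesis using eq[of "enat (Suc n)"] Pi_n_Suc[OF n, of p] by (simp add: mult.commute)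
  qed
  have e4: "f \<infinity> = 0"
  proof -
    have "infsum (\<lambda>s. f s * Pi_p p s \<infinity>) UNIV = f \<infinity> * Pi_p p \<infinity> \<infinity>"
    proof (rule infsum_single_supp)
      fix s :: enat assume sn: "s \<noteq> \<infinity>"
      then obtain m where m: "s = enat m" by (cases s) auto
      show "f s * Pi_p p s \<infinity> = 0" unfolding m by (simp add: Pi_p_def one_enat_def zero_enat_def)
    qed
    moreover have "Pi_p p \<infinity> \<infinity> = LL p" by (simp add: Pi_p_def g_p_def LL_def[OF p0 p1])
    ultimately have "f \<infinity> = f \<infinity> * LL p" using eq[of \<infinity>] by simp
    then have "f \<infinity> * (1 - LL p) = 0" by (simp add: algebra_simps)
    then show ?thesis using LL_lt1[OF p0 p1] by simp
  qed
  have piv0: "0 < piv p 0" using p0 p1 by (simp add: piv_0[OF p0 p1])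
  define c where "c = f 0 / piv p 0"
  have c0: "0 \<le> c" using piv0 by (simp add: c_def f_def)
  have f0: "f 0 = c * piv p 0" using piv0 by (simp add: c_def)
  have f1: "f 1 = c * piv p 1"
  proof -
    have "f 1 * (1 - p) = f 0" using e1 by (simp add: algebra_simps)
    then have "f 1 = f 0 / (1 - p)" using p1 by (simp add: field_simps)
    also have "\<dots> = c * piv p 1" using p1 by (simp add: f0 piv_0[OF p0 p1] piv_1[OF p0 p1] field_simps)
    finally show ?thesis .
  qed
  have f2: "f (enat 2) = c * piv p (enat 2)"
  proof -
    have pv2: "piv p (enat 2) = p * p * (1 - p)"
      by (simp add: piv_n[OF p0 p1] numeral_2_eq_2 dl_def Pi_1_2)
    have A: "f (enat 2) = (1 - p) * f 1" using e2 by (simp add: numeral_eq_enat)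
    show ?thesis unfolding A f1 pv2 piv_1[OF p0 p1] by (simp add: ac_simps)
  qed
  have fn: "f (enat n) = c * piv p (enat n)" if "2 \<le> n" for n
    using that
  proof (induction n rule: nat_induct_at_least)
    case base then show ?case using f2 by simp
  next
    case (Suc n)
    then show ?case using e3[OF Suc.hyps] piv_step[OF Suc.hyps] by simp
  qed
  have fall: "f s = c * piv p s" for s
  proof (cases s)
    case (enat n)
    consider "n = 0" | "n = 1" | "2 \<le> n" by linarith
    then show ?thesis
    proof cases
      case 1 then show ?thesis using f0 enat by (simp add: zero_enat_def)
    next
      case 2 then show ?thesis using f1 enat by (simp add: one_enat_def)
    next
      case 3 then show ?thesis using fn enat by simp
    qed
  next
    case infinity then show ?thesis using e4 by (simp add: piv_inf[OF p0 p1])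
  qed
  have "1 = (\<integral>\<^sup>+ s. ennreal (f s) \<partial>count_space UNIV)"
    unfolding f_def by (simp add: nn_integral_pmf)
  also have "\<dots> = (\<integral>\<^sup>+ s. ennreal c * ennreal (piv p s) \<partial>count_space UNIV)"
    unfolding fall using c0 by (intro nn_integral_cong) (simp add: ennreal_mult piv_nonneg[OF p0 p1])
  also have "\<dots> = ennreal c * (\<integral>\<^sup>+ s. ennreal (piv p s) \<partial>count_space UNIV)"
    by (rule nn_integral_cmult) simp
  also have "\<dots> = ennreal c" using piv_sum[OF p0 p1] by simp
  finally have "c = 1" using c0 by (metis ennreal_eq_1)
  then have "pmf \<sigma> s = pmf (pi0 p) s" for s using fall[of s] by (simp add: f_def pmf_pi0[OF p0 p1])
  then show ?thesis by (rule pmf_eqI)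
qed

end

lemma prod_emb_Smeas: "prod_emb UNIV (\<lambda>_::int. count_space (UNIV::enat set)) J (Pi\<^sub>E J A) = {n. \<forall>i\<in>J. n i \<in> A i}"
  by (auto simp: prod_emb_iff PiE_iff restrict_def extensional_def)

lemma law_unique:
  assumes sP: "sets P = sets S_path_M" and sQ: "sets Q = sets S_path_M" and fin: "finite_measure P"
    and eq: "\<And>k xs. xs \<noteq> [] \<Longrightarrow> emeasure P (cylS k xs) = emeasure Q (cylS k xs)"
  shows "P = Q"
proof (rule measure_eqI_PiM_infinite[where I="UNIV::int set" and M="\<lambda>_::int. count_space (UNIV::enat set)"])
  show "sets P = sets (Pi\<^sub>M UNIV (\<lambda>_::int. count_space (UNIV::enat set)))" using sP by (simp add: S_path_M_def)
  show "sets Q = sets (Pi\<^sub>M UNIV (\<lambda>_::int. count_space (UNIV::enat set)))" using sQ by (simp add: S_path_M_def)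
  show "finite_measure P" by (rule fin)
next
  fix J :: "int set" and A :: "int \<Rightarrow> enat set"
  assume J: "finite J"
  define N where "N = Max (insert 0 ((\<lambda>i. nat \<bar>i\<bar>) ` J))"
  have N: "\<bar>i\<bar> \<le> int N" if "i \<in> J" for i
  proof -
    have "nat \<bar>i\<bar> \<le> N" unfolding N_def using J that by (intro Max_ge) auto
    then show ?thesis by simp
  qed
  define k where "k = - int N"
  define m where "m = 2 * N + 1"
  define Idx where "Idx = {xs :: enat list. length xs = m \<and> (\<forall>j<m. k + int j \<in> J \<longrightarrow> xs ! j \<in> A (k + int j))}"
  have inJ: "i = k + int (nat (i - k)) \<and> nat (i - k) < m" if "i \<in> J" for i
    using N[OF that] by (auto simp: k_def m_def)
  have U: "prod_emb UNIV (\<lambda>_. count_space UNIV) J (Pi\<^sub>E J A) = (\<Union>xs\<in>Idx. cylS k xs)"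
  proof (intro set_eqI iffI)
    fix n assume "n \<in> prod_emb UNIV (\<lambda>_. count_space UNIV) J (Pi\<^sub>E J A)"
    then have H: "\<forall>i\<in>J. n i \<in> A i" by (simp add: prod_emb_Smeas)
    define xs where "xs = map (\<lambda>j. n (k + int j)) [0..<m]"
    have "xs \<in> Idx" using H by (auto simp: Idx_def xs_def)
    moreover have "n \<in> cylS k xs" by (simp add: cylS_def xs_def space_S)
    ultimately show "n \<in> (\<Union>xs\<in>Idx. cylS k xs)" by blast
  next
    fix n assume "n \<in> (\<Union>xs\<in>Idx. cylS k xs)"
    then obtain xs where xs: "xs \<in> Idx" "n \<in> cylS k xs" by blast
    have lx: "length xs = m" using xs(1) by (simp add: Idx_def)
    have c: "\<forall>j<m. n (k + int j) = xs ! j" using xs(2) lx by (simp add: cylS_def)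
    have a: "\<forall>j<m. k + int j \<in> J \<longrightarrow> xs ! j \<in> A (k + int j)" using xs(1) by (simp add: Idx_def)
    have "n i \<in> A i" if i: "i \<in> J" for i
    proof -
      obtain j0 where j0: "i = k + int j0" "j0 < m" using inJ[OF i] by blast
      have "n (k + int j0) = xs ! j0" using c j0(2) by blast
      moreover have "xs ! j0 \<in> A (k + int j0)" using a j0 i by blast
      ultimately show ?thesis using j0(1) by simp
    qed
    then show "n \<in> prod_emb UNIV (\<lambda>_. count_space UNIV) J (Pi\<^sub>E J A)" by (simp add: prod_emb_Smeas)
  qed
  have disj: "disjoint_family_on (cylS k) Idx"
    unfolding disjoint_family_on_def
  proof (intro ballI impI)
    fix xs ys assume "xs \<in> Idx" "ys \<in> Idx" "xs \<noteq> ys"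
    then have l: "length xs = m" "length ys = m" by (auto simp: Idx_def)
    then obtain j where j: "j < m" "xs ! j \<noteq> ys ! j" using \<open>xs \<noteq> ys\<close> unfolding list_eq_iff_nth_eq by auto
    show "cylS k xs \<inter> cylS k ys = {}"
      using j l by (auto simp: cylS_def)
  qed
  have cnt: "countable Idx" by (rule countableI_type)
  have ne: "xs \<noteq> []" if "xs \<in> Idx" for xs using that by (auto simp: Idx_def m_def)
  have "emeasure P (\<Union>xs\<in>Idx. cylS k xs) = (\<integral>\<^sup>+ xs. emeasure P (cylS k xs) \<partial>count_space Idx)"
    by (rule emeasure_UN_countable) (use cylS_sets sP cnt disj in auto)
  also have "\<dots> = (\<integral>\<^sup>+ xs. emeasure Q (cylS k xs) \<partial>count_space Idx)"
    by (rule nn_integral_cong) (simp add: eq ne)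
  also have "\<dots> = emeasure Q (\<Union>xs\<in>Idx. cylS k xs)"
    by (rule emeasure_UN_countable[symmetric]) (use cylS_sets sQ cnt disj in auto)
  finally show "emeasure P (prod_emb UNIV (\<lambda>_. count_space UNIV) J (Pi\<^sub>E J A)) =
                emeasure Q (prod_emb UNIV (\<lambda>_. count_space UNIV) J (Pi\<^sub>E J A))"
    unfolding U .
qed

context
  fixes p :: real
  assumes p0: "0 < p" and p1: "p < 1"
begin

lemma law_P0: "stationary_chain_law p (pi0 p) (P0 p)"
  unfolding stationary_chain_law_def
proof (intro conjI allI impI)
  show "sets (P0 p) = sets S_path_M" by (rule sets_P0)
  show "prob_space (P0 p)" by (rule prob_P0)
  fix k :: int and xs :: "enat list" assume "xs \<noteq> []"
  then obtain s ys where xs: "xs = s # ys" by (cases xs) auto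
  have "{n \<in> space (P0 p). \<forall>j<length xs. n (k + int j) = xs ! j} = cylS k xs"
    by (simp add: cylS_def space_P0 space_S)
  then show "emeasure (P0 p) {n \<in> space (P0 p). \<forall>j<length xs. n (k + int j) = xs ! j} =
        ennreal (pmf (pi0 p) (xs ! 0) * (\<Prod>j<length xs - 1. Pi_p p (xs ! j) (xs ! Suc j)))"
    using P0_cyl[OF p0 p1, of k s ys] unfolding xs by (simp add: pmf_pi0[OF p0 p1])
qed

lemma law_eq_P0:
  assumes L: "stationary_chain_law p (pi0 p) P"
  shows "P = P0 p"
proof (rule law_unique)
  show sP: "sets P = sets S_path_M" using L by (simp add: stationary_chain_law_def)
  show "sets (P0 p) = sets S_path_M" by (rule sets_P0)
  show "finite_measure P" using L by (simp add: stationary_chain_law_def prob_space.finite_measure)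
  have spP: "space P = space S_path_M" using sP by (rule sets_eq_imp_space_eq)
  fix k xs assume "xs \<noteq> ([] :: enat list)"
  have cP: "{n \<in> space P. \<forall>j<length xs. n (k + int j) = xs ! j} = cylS k xs"
    by (simp add: cylS_def spP)
  have cP0: "{n \<in> space (P0 p). \<forall>j<length xs. n (k + int j) = xs ! j} = cylS k xs"
    by (simp add: cylS_def space_P0 space_S)
  have a: "emeasure P {n \<in> space P. \<forall>j<length xs. n (k + int j) = xs ! j}
        = ennreal (pmf (pi0 p) (xs ! 0) * (\<Prod>j<length xs - 1. Pi_p p (xs ! j) (xs ! Suc j)))"
    using L \<open>xs \<noteq> []\<close> unfolding stationary_chain_law_def by blast
  have b: "emeasure (P0 p) {n \<in> space (P0 p). \<forall>j<length xs. n (k + int j) = xs ! j}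
        = ennreal (pmf (pi0 p) (xs ! 0) * (\<Prod>j<length xs - 1. Pi_p p (xs ! j) (xs ! Suc j)))"
    using law_P0 \<open>xs \<noteq> []\<close> unfolding stationary_chain_law_def by blast
  show "emeasure P (cylS k xs) = emeasure (P0 p) (cylS k xs)"
    using a b unfolding cP cP0 by simp
qed

end

theorem theorem3p7:
  fixes p :: real
  assumes "0 < p" and "p < 1"
  shows "(\<exists>!\<pi>. stationary_dist p \<pi>)
         \<and> (\<forall>\<pi>. stationary_dist p \<pi> \<longrightarrow>
               (\<exists>P. stationary_chain_law p \<pi> P)
             \<and> (\<forall>P. stationary_chain_law p \<pi> P \<longrightarrow>
                  distr P Omega_M (\<lambda>n i. tau (n i)) = TBF p))"
proof -
  note p0 = assms(1) and p1 = assms(2)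
  have uniq: "\<And>\<sigma>. stationary_dist p \<sigma> \<Longrightarrow> \<sigma> = pi0 p" using stat_unique[OF p0 p1] by blast
  show ?thesis
  proof (intro conjI allI impI)
    show "\<exists>!\<pi>. stationary_dist p \<pi>" using stat_pi0[OF p0 p1] uniq by blast
  next
    fix \<pi> assume "stationary_dist p \<pi>"
    then have pi: "\<pi> = pi0 p" by (rule uniq)
    show "\<exists>P. stationary_chain_law p \<pi> P" unfolding pi using law_P0[OF p0 p1] by blast
  next
    fix \<pi> P assume "stationary_dist p \<pi>" and L: "stationary_chain_law p \<pi> P"
    then have pi: "\<pi> = pi0 p" by (intro uniq)
    have "P = P0 p" using L unfolding pi by (rule law_eq_P0[OF p0 p1])
    then show "distr P Omega_M (\<lambda>n i. tau (n i)) = TBF p" by (simp add: tau_law_P0)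
  qed
qed

end
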